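(* Let $1<q<p<N$, $N\ge2$, $p^\ast=Np/(N-p)$, and $N(p-1)/(N-p)<s<p^\ast$. Let $(\varepsilon_j)$, $(\delta_j)$ be sequences with $\varepsilon_j\to0$, $0<\delta_j\le1$, $\varepsilon_j/\delta_j\to0$. Then $$\frac{\int_{\mathbb{R}^N}|\nabla v_{\varepsilon_j,\delta_j}|^q\,dx}{\int_{\mathbb{R}^N}v_{\varepsilon_j,\delta_j}^s\,dx}=\begin{cases}\Theta\big(\varepsilon_j^{[(N-p)s-Nq]/p}\big),& q>\frac{N(p-1)}{N-1},\\ \Theta\big(\varepsilon_j^{[(N-p)s-Nq]/p}\,|\log(\varepsilon_j/\delta_j)|\big),& q=\frac{N(p-1)}{N-1},\\ \Theta\big(\varepsilon_j^{[(N-p)(s+q/(p-1))-Np]/p}\,\delta_j^{[N(p-1)-(N-1)q]/(p-1)}\big),& q<\frac{N(p-1)}{N-1},\end{cases}$$ and $$\frac{(\varepsilon_j/\delta_j)^{(N-p)/(p-1)}}{\int_{\mathbb{R}^N}v_{\varepsilon_j,\delta_j}^s\,dx}=\Theta\big(\varepsilon_j^{[(N-p)(p-1)s-(Np-2N+p)p]/(p(p-1))}\,\delta_j^{-(N-p)/(p-1)}\big).$$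
   Context: Fix $\rho>0$ and $\psi\in C^\infty_0(B_\rho(0))$ with $0\le\psi\le1$, $\psi=1$ on $B_{\rho/2}(0)$. For $\varepsilon>0$, $0<\delta\le1$, $u_{\varepsilon,\delta}(x)=\psi(x/\delta)\big(\varepsilon^{p/(p-1)}+|x|^{p/(p-1)}\big)^{-(N-p)/p}$ and $v_{\varepsilon,\delta}=u_{\varepsilon,\delta}/\|u_{\varepsilon,\delta}\|_{L^{p^\ast}(\mathbb{R}^N)}$. Notation: $A_j=\Theta(B_j)$ means there are constants $c,C>0$ with $c|B_j|\le|A_j|\le C|B_j|$ for all sufficiently large $j$. *)

theory Defs
  imports "HOL-Analysis.Analysis"
begin

fun dpart :: "'a::euclidean_space list \<Rightarrow> ('a \<Rightarrow> real) \<Rightarrow> ('a \<Rightarrow> real)" where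
  "dpart [] f = f"
| "dpart (d # ds) f = (\<lambda>x. frechet_derivative (dpart ds f) (at x) d)"

definition smooth_fun :: "('a::euclidean_space \<Rightarrow> real) \<Rightarrow> bool" where
  "smooth_fun f \<longleftrightarrow> (\<forall>ds. set ds \<subseteq> Basis \<longrightarrow> dpart ds f differentiable_on UNIV)"

definition grad :: "('a::euclidean_space \<Rightarrow> real) \<Rightarrow> 'a \<Rightarrow> 'a" where
  "grad f x = (\<Sum>i\<in>Basis. frechet_derivative f (at x) i *\<^sub>R i)"

definition u_fun :: "real \<Rightarrow> real \<Rightarrow> ('a::euclidean_space \<Rightarrow> real) \<Rightarrow> real \<Rightarrow> real \<Rightarrow> 'a \<Rightarrow> real" where
  "u_fun N p \<psi> \<epsilon> \<delta> x =
     \<psi> ((1 / \<delta>) *\<^sub>R x) * (\<epsilon> powr (p/(p-1)) + norm x powr (p/(p-1))) powr (-(N-p)/p)"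

definition Lnorm :: "real \<Rightarrow> ('a::euclidean_space \<Rightarrow> real) \<Rightarrow> real" where
  "Lnorm r f = (integral\<^sup>L lborel (\<lambda>x. \<bar>f x\<bar> powr r)) powr (1/r)"

definition v_fun :: "real \<Rightarrow> real \<Rightarrow> ('a::euclidean_space \<Rightarrow> real) \<Rightarrow> real \<Rightarrow> real \<Rightarrow> 'a \<Rightarrow> real" where
  "v_fun N p \<psi> \<epsilon> \<delta> x = u_fun N p \<psi> \<epsilon> \<delta> x / Lnorm (N*p/(N-p)) (u_fun N p \<psi> \<epsilon> \<delta>)"

definition Theta_seq :: "(nat \<Rightarrow> real) \<Rightarrow> (nat \<Rightarrow> real) \<Rightarrow> bool" where
  "Theta_seq A B \<longleftrightarrow> (\<exists>c C. c > 0 \<and> C > 0 \<and>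
      (\<forall>\<^sub>F j in sequentially. c * \<bar>B j\<bar> \<le> \<bar>A j\<bar> \<and> \<bar>A j\<bar> \<le> C * \<bar>B j\<bar>))"

end

theory Submission
  imports Defs
begin


definition ann :: "real \<Rightarrow> real \<Rightarrow> 'a::euclidean_space set" where
  "ann r1 r2 = {x. r1 \<le> norm x \<and> norm x < r2}"

lemma ann_eq: "ann r1 r2 = ball 0 r2 - ball 0 r1"
  by (auto simp: ann_def)

lemma ann_sets[measurable]: "ann r1 r2 \<in> sets lborel"
  unfolding ann_eq by simp

lemma ann_fin: "emeasure lborel (ann r1 r2 :: 'a::euclidean_space set) < \<infinity>"
proof -
  have "emeasure lborel (ann r1 r2 :: 'a set) \<le> emeasure lborel (ball (0::'a) r2)"
    by (intro emeasure_mono) (auto simp: ann_eq)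
  also have "\<dots> < \<infinity>" by (intro emeasure_bounded_finite) simp
  finally show ?thesis .
qed

lemma ball_fin: "emeasure lborel (ball (0::'a::euclidean_space) r) < \<infinity>"
  by (intro emeasure_bounded_finite) simp

lemma measure_ball0: "0 \<le> r \<Longrightarrow> measure lborel (ball (0::'a::euclidean_space) r) = unit_ball_vol DIM('a) * r ^ DIM('a)"
  using content_ball by blast

lemma measure_ann: assumes "0 \<le> r1" "r1 \<le> r2"
  shows "measure lborel (ann r1 r2 :: 'a::euclidean_space set) = unit_ball_vol DIM('a) * (r2 ^ DIM('a) - r1 ^ DIM('a))"
proof -
  have "measure lborel (ann r1 r2 :: 'a set) = measure lborel (ball (0::'a) r2) - measure lborel (ball (0::'a) r1)"
    unfolding ann_eq using assms ball_fin[of r2, where 'a='a] by (intro measure_Diff) auto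
  then show ?thesis using assms by (simp add: measure_ball0 algebra_simps)
qed

lemma integrable_ind_ann: "integrable lborel (\<lambda>x::'a::euclidean_space. (c::real) * indicator (ann r1 r2) x)"
proof -
  have "integrable lborel (indicat_real (ann r1 r2 :: 'a set))"
    using ann_fin[of r1 r2] by (simp add: integrable_indicator_iff ann_eq)
  then show ?thesis by (auto intro!: integrable_mult_right)
qed

lemma integrable_ind_ball: "integrable lborel (\<lambda>x::'a::euclidean_space. (c::real) * indicator (ball 0 r) x)"
proof -
  have "integrable lborel (indicat_real (ball 0 r :: 'a set))"
    using ball_fin[of r] by (simp add: integrable_indicator_iff)
  then show ?thesis by (auto intro!: integrable_mult_right)
qed

lemma integrable_ann_ind: "integrable lborel (indicat_real (ann r1 r2 :: 'a::euclidean_space set))"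
  using integrable_ind_ann[of 1 r1 r2, where 'a='a] by simp

lemma integral_ind_ann: "integral\<^sup>L lborel (\<lambda>x::'a::euclidean_space. (c::real) * indicator (ann r1 r2) x) = c * measure lborel (ann r1 r2 :: 'a set)"
  by simp

lemma integral_ind_ball: "integral\<^sup>L lborel (\<lambda>x::'a::euclidean_space. (c::real) * indicator (ball 0 r) x) = c * measure lborel (ball 0 r :: 'a set)"
  by simp

lemma step_integrable: "integrable lborel (\<lambda>x::'a::euclidean_space. \<Sum>k<K. (c k::real) * indicator (ann (r1 k) (r2 k)) x)"
  by (intro Bochner_Integration.integrable_sum integrable_ind_ann)

lemma step_integral: "integral\<^sup>L lborel (\<lambda>x::'a::euclidean_space. \<Sum>k<K. (c k::real) * indicator (ann (r1 k) (r2 k)) x)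
   = (\<Sum>k<K. c k * measure lborel (ann (r1 k) (r2 k) :: 'a set))"
  by (subst Bochner_Integration.integral_sum) (auto intro!: integrable_ind_ann simp: integrable_ann_ind)

definition sh :: "real \<Rightarrow> nat \<Rightarrow> 'a::euclidean_space set" where
  "sh r k = ann (r * 2^k) (r * 2^(k+1))"

lemma sh_disj: assumes "r > 0" "x \<in> sh r j" "x \<in> sh r k" shows "j = k"
proof (rule ccontr)
  assume "j \<noteq> k"
  then consider "j < k" | "k < j" by linarith
  then show False
  proof cases
    case 1
    then have "(2::real)^(j+1) \<le> 2^k" by (intro power_increasing) auto
    then have "r * 2^(j+1) \<le> r * 2^k" using assms by simp
    moreover have "r * 2^k \<le> norm x" "norm x < r * 2^(j+1)" using assms(2,3) by (auto simp: sh_def ann_def simp del: power_Suc)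
    ultimately show False by linarith
  next
    case 2
    then have "(2::real)^(k+1) \<le> 2^j" by (intro power_increasing) auto
    then have "r * 2^(k+1) \<le> r * 2^j" using assms by simp
    moreover have "r * 2^j \<le> norm x" "norm x < r * 2^(k+1)" using assms(2,3) by (auto simp: sh_def ann_def simp del: power_Suc)
    ultimately show False by linarith
  qed
qed

lemma dyadic_ex: fixes y :: real assumes "1 \<le> y" "y < 2^K" shows "\<exists>k<K. 2^k \<le> y \<and> y < 2^(k+1)"
  using assms
proof (induction K)
  case 0 then show ?case by simp
next
  case (Suc K)
  show ?case
  proof (cases "y < 2^K")
    case True then show ?thesis using Suc by (metis less_Suc_eq)
  next
    case False then show ?thesis using Suc by auto
  qed
qed

lemma sh_cover: assumes "r > 0" "r \<le> norm x" "norm x < r * 2^K" shows "\<exists>k<K. x \<in> sh r k"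
proof -
  have "1 \<le> norm x / r" "norm x / r < 2^K" using assms by (auto simp: field_simps)
  from dyadic_ex[OF this] obtain k where "k<K" "2^k \<le> norm x / r" "norm x / r < 2^(k+1)" by blast
  then show ?thesis using assms by (auto simp: sh_def ann_def field_simps)
qed

lemma sum_ind_single: assumes "r > 0" "x \<in> sh r j" "j < K"
  shows "(\<Sum>k<K. c k * indicator (sh r k) x) = (c j :: real)"
proof -
  have *: "c k * indicator (sh r k) x = (if k = j then c j else 0)" for k
  proof (cases "k = j")
    case True then show ?thesis using assms by (simp add: indicator_def)
  next
    case False
    then have "x \<notin> sh r k" using sh_disj[OF assms(1,2), of k] by auto
    then show ?thesis using False by (simp add: indicator_def)
  qed
  have "(\<Sum>k<K. c k * indicator (sh r k) x) = (\<Sum>k<K. if k = j then c j else 0)"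
    by (intro sum.cong refl *)
  also have "\<dots> = c j" using assms by simp
  finally show ?thesis .
qed

lemma sum_ind_none: assumes "\<And>k. k < K \<Longrightarrow> x \<notin> sh r k"
  shows "(\<Sum>k<K. c k * indicator (sh r k) x) = (0 :: real)"
  using assms by (intro sum.neutral) auto

lemma pow_aux: "(r*2^(k+1))^d - (r*(2::real)^k)^d = (2^d - 1) * r^d * (2^d)^k"
proof -
  have "(r*2^(k+1))^d = r^d * (2^d)^k * 2^d" by (simp add: power_mult_distrib power_add flip: power_mult)
  moreover have "(r*(2::real)^k)^d = r^d * (2^d)^k" by (simp add: power_mult_distrib power_add flip: power_mult)
  moreover have "((2::real)^k)^d = (2^d)^k" by (metis power_mult mult.commute)
  ultimately show ?thesis by (simp add: algebra_simps)
qed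

lemma measure_sh: assumes "r > 0"
  shows "measure lborel (sh r k :: 'a::euclidean_space set) = unit_ball_vol DIM('a) * (2^DIM('a) - 1) * r^DIM('a) * (2^DIM('a))^k"
proof -
  have "r * 2^k \<le> r * 2^(k+1)" using assms by simp
  then have "measure lborel (sh r k :: 'a set) = unit_ball_vol DIM('a) * ((r * 2^(k+1)) ^ DIM('a) - (r*2^k) ^ DIM('a))"
    unfolding sh_def using assms by (intro measure_ann) auto
  then show ?thesis by (simp only: pow_aux mult.assoc)
qed



definition th :: "(nat \<Rightarrow> real) \<Rightarrow> (nat \<Rightarrow> real) \<Rightarrow> bool" where
  "th A B \<longleftrightarrow> (\<exists>c C. 0 < c \<and> 0 < C \<and> (\<forall>\<^sub>F j in sequentially. 0 < B j \<and> c * B j \<le> A j \<and> A j \<le> C * B j))"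

lemma thI: assumes "0 < c" "0 < C" "\<forall>\<^sub>F j in sequentially. 0 < B j \<and> c * B j \<le> A j \<and> A j \<le> C * B j"
  shows "th A B" using assms unfolding th_def by blast

lemma th_Theta: "th A B \<Longrightarrow> Theta_seq A B"
  unfolding th_def Theta_seq_def
proof (elim exE conjE, intro exI conjI)
  fix c C assume *: "0 < c" "0 < C" "\<forall>\<^sub>F j in sequentially. 0 < B j \<and> c * B j \<le> A j \<and> A j \<le> C * B j"
  show "0 < c" "0 < C" by fact+
  show "\<forall>\<^sub>F j in sequentially. c * \<bar>B j\<bar> \<le> \<bar>A j\<bar> \<and> \<bar>A j\<bar> \<le> C * \<bar>B j\<bar>"
    using *(3) 
  proof eventually_elim
    case (elim j)
    then have "0 \<le> A j" using *(1) by (smt (verit) mult_pos_pos)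
    then show ?case using elim by simp
  qed
qed

lemma th_cong: assumes "th A B" "\<forall>\<^sub>F j in sequentially. A j = A' j" "\<forall>\<^sub>F j in sequentially. B j = B' j"
  shows "th A' B'"
  using assms unfolding th_def
proof (elim exE conjE, intro exI conjI)
  fix c C assume *: "0 < c" "0 < C" "\<forall>\<^sub>F j in sequentially. 0 < B j \<and> c * B j \<le> A j \<and> A j \<le> C * B j"
  show "0 < c" "0 < C" by fact+
  show "\<forall>\<^sub>F j in sequentially. 0 < B' j \<and> c * B' j \<le> A' j \<and> A' j \<le> C * B' j"
    using *(3) assms(2,3) by eventually_elim auto
qed

lemma th_mult: assumes "th A B" "th A' B'" shows "th (\<lambda>j. A j * A' j) (\<lambda>j. B j * B' j)"
proof -
  obtain c C where c: "0 < c" "0 < C" "\<forall>\<^sub>F j in sequentially. 0 < B j \<and> c * B j \<le> A j \<and> A j \<le> C * B j"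
    using assms(1) unfolding th_def by blast
  obtain c' C' where c': "0 < c'" "0 < C'" "\<forall>\<^sub>F j in sequentially. 0 < B' j \<and> c' * B' j \<le> A' j \<and> A' j \<le> C' * B' j"
    using assms(2) unfolding th_def by blast
  show ?thesis
  proof (rule thI[of "c*c'" "C*C'"])
    show "0 < c*c'" "0 < C*C'" using c c' by auto
    show "\<forall>\<^sub>F j in sequentially. 0 < B j * B' j \<and> c * c' * (B j * B' j) \<le> A j * A' j \<and> A j * A' j \<le> C * C' * (B j * B' j)"
      using c(3) c'(3)
    proof eventually_elim
      case (elim j)
      have 1: "0 \<le> c * B j" "0 \<le> c' * B' j" using elim c c' by auto
      have "c * c' * (B j * B' j) = (c * B j) * (c' * B' j)" by simp
      also have "\<dots> \<le> A j * A' j" using elim 1 by (intro mult_mono) auto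
      finally have a: "c * c' * (B j * B' j) \<le> A j * A' j" .
      have "A j * A' j \<le> (C * B j) * (C' * B' j)" using elim 1 by (intro mult_mono) auto
      then show ?case using a elim by (simp add: mult_ac)
    qed
  qed
qed

lemma th_inverse: assumes "th A B" shows "th (\<lambda>j. 1 / A j) (\<lambda>j. 1 / B j)"
proof -
  obtain c C where c: "0 < c" "0 < C" "\<forall>\<^sub>F j in sequentially. 0 < B j \<and> c * B j \<le> A j \<and> A j \<le> C * B j"
    using assms(1) unfolding th_def by blast
  show ?thesis
  proof (rule thI[of "1/C" "1/c"])
    show "0 < 1/C" "0 < 1/c" using c by auto
    show "\<forall>\<^sub>F j in sequentially. 0 < 1 / B j \<and> 1 / C * (1 / B j) \<le> 1 / A j \<and> 1 / A j \<le> 1 / c * (1 / B j)"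
      using c(3)
    proof eventually_elim
      case (elim j)
      then have "0 < c * B j" using c by auto
      then have "0 < A j" using elim by linarith
      then show ?case using elim c by (auto simp: field_simps)
    qed
  qed
qed

lemma th_div: assumes "th A B" "th A' B'" shows "th (\<lambda>j. A j / A' j) (\<lambda>j. B j / B' j)"
  using th_mult[OF assms(1) th_inverse[OF assms(2)]] by (simp add: divide_inverse)

lemma th_powr: assumes "th A B" shows "th (\<lambda>j. A j powr e) (\<lambda>j. B j powr e)"
proof -
  obtain c C where c: "0 < c" "0 < C" "\<forall>\<^sub>F j in sequentially. 0 < B j \<and> c * B j \<le> A j \<and> A j \<le> C * B j"
    using assms(1) unfolding th_def by blast
  show ?thesis
  proof (rule thI[of "min (c powr e) (C powr e)" "max (c powr e) (C powr e)"])
    have "0 < c powr e" "0 < C powr e" using c by auto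
    then show "0 < min (c powr e) (C powr e)" "0 < max (c powr e) (C powr e)" by (auto simp: less_max_iff_disj)
    show "\<forall>\<^sub>F j in sequentially. 0 < B j powr e \<and> min (c powr e) (C powr e) * B j powr e \<le> A j powr e \<and> A j powr e \<le> max (c powr e) (C powr e) * B j powr e"
      using c(3)
    proof eventually_elim
      case (elim j)
      have cb: "0 < c * B j" using elim c by auto
      have pb: "0 < B j powr e" using elim by auto
      have m: "min (c powr e) (C powr e) * B j powr e \<le> c powr e * B j powr e"
              "min (c powr e) (C powr e) * B j powr e \<le> C powr e * B j powr e"
              "c powr e * B j powr e \<le> max (c powr e) (C powr e) * B j powr e"
              "C powr e * B j powr e \<le> max (c powr e) (C powr e) * B j powr e"
        using pb by (intro mult_right_mono; simp)+
      have cB: "0 < C * B j" using elim c by auto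
      show ?case
      proof (cases "0 \<le> e")
        case True
        have "(c * B j) powr e \<le> A j powr e" using elim cb True by (intro powr_mono2) auto
        moreover have "A j powr e \<le> (C * B j) powr e" using elim cb True by (intro powr_mono2) auto
        ultimately have "c powr e * B j powr e \<le> A j powr e" "A j powr e \<le> C powr e * B j powr e"
          using c elim by (simp_all add: powr_mult)
        then show ?thesis using m pb by (intro conjI) linarith+
      next
        case False
        have "A j powr e \<le> (c * B j) powr e" using elim cb False by (intro powr_mono2') auto
        moreover have "(C * B j) powr e \<le> A j powr e" using elim cb cB False by (intro powr_mono2') auto
        ultimately have "C powr e * B j powr e \<le> A j powr e" "A j powr e \<le> c powr e * B j powr e"
          using c elim by (simp_all add: powr_mult)
        then show ?thesis using m pb by (intro conjI) linarith+
      qed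
    qed
  qed
qed

lemma th_refl: assumes "\<forall>\<^sub>F j in sequentially. 0 < B j" shows "th B B"
  using assms by (intro thI[of 1 1]) auto

lemma th_scale: assumes "th A B" "k > 0" shows "th A (\<lambda>j. k * B j)"
proof -
  obtain c C where c: "0 < c" "0 < C" "\<forall>\<^sub>F j in sequentially. 0 < B j \<and> c * B j \<le> A j \<and> A j \<le> C * B j"
    using assms(1) unfolding th_def by blast
  show ?thesis
    apply (rule thI[of "c/k" "C/k"])
    using c assms(2) apply auto[2]
    using c(3) by eventually_elim (use assms(2) in auto)
qed

lemma powr_sum_le: assumes "0 \<le> (X::real)" "0 \<le> Y" "0 < q"
  shows "(X + Y) powr q \<le> 2 powr q * (X powr q + Y powr q)"
proof -
  have "(X + Y) powr q \<le> (2 * max X Y) powr q" using assms by (intro powr_mono2) auto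
  also have "\<dots> = 2 powr q * max X Y powr q" using assms by (simp add: powr_mult)
  also have "max X Y powr q \<le> X powr q + Y powr q" using assms by (auto simp: max_def)
  finally show ?thesis by (simp add: mult_left_mono)
qed

lemma geo_neg: assumes "(x::real) < 1" "0 \<le> x" shows "(\<Sum>k<K. x^k) \<le> 1 / (1 - x)"
proof -
  have "(\<Sum>k<K. x^k) = (1 - x^K) / (1 - x)" using assms by (simp add: sum_gp_strict)
  also have "\<dots> \<le> 1 / (1 - x)" using assms by (intro divide_right_mono) auto
  finally show ?thesis .
qed

lemma geo_ge1: assumes "1 \<le> K" "0 \<le> (x::real)" shows "1 \<le> (\<Sum>k<K. x^k)"
proof -
  have "(\<Sum>k<K. x^k) = (\<Sum>k\<in>{0} \<union> {1..<K}. x^k)" using assms(1) by (intro sum.cong) auto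
  also have "\<dots> = 1 + (\<Sum>k\<in>{1..<K}. x^k)" by (subst sum.union_disjoint) auto
  also have "\<dots> \<ge> 1" using assms by (simp add: sum_nonneg)
  finally show ?thesis .
qed

lemma geo_pos_up: assumes "1 < (x::real)" shows "(\<Sum>k<K. x^k) \<le> x^K / (x - 1)"
proof -
  have "(\<Sum>k<K. x^k) = (x^K - 1) / (x - 1)" using assms sum_gp_strict[of x K] by (simp add: field_simps)
  also have "\<dots> \<le> x^K / (x - 1)" using assms by (intro divide_right_mono) auto
  finally show ?thesis .
qed

lemma geo_pos_lo: assumes "1 \<le> K" "0 \<le> (x::real)" shows "x^(K-1) \<le> (\<Sum>k<K. x^k)"
proof -
  have "x^(K-1) = (\<Sum>k\<in>{K-1}. x^k)" by simp
  also have "\<dots> \<le> (\<Sum>k<K. x^k)" using assms by (intro sum_mono2) auto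
  finally show ?thesis .
qed

lemma dy_up: assumes "1 \<le> (X::real)" shows "\<exists>K. X \<le> 2^K \<and> 2^K \<le> 2 * X"
proof -
  obtain K0 where "X < 2^K0" using real_arch_pow[of 2 X] by auto
  from dyadic_ex[OF assms this] obtain k where "2^k \<le> X" "X < 2^(k+1)" by blast
  then show ?thesis by (intro exI[of _ "k+1"]) auto
qed

lemma dy_lo: assumes "2 \<le> (X::real)" shows "\<exists>K. 1 \<le> K \<and> 2^K \<le> X \<and> X < 2^(K+1)"
proof -
  obtain K0 where "X < 2^K0" using real_arch_pow[of 2 X] by auto
  from dyadic_ex[OF _ this] assms obtain k where k: "2^k \<le> X" "X < 2^(k+1)" by auto
  have "k \<noteq> 0" proof assume "k = 0" then show False using k assms by simp qed
  then show ?thesis using k by (intro exI[of _ k]) auto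
qed



lemma grad_eq: assumes "(f has_derivative (\<lambda>h. g \<bullet> h)) (at x)" shows "grad f x = g"
proof -
  have "frechet_derivative f (at x) = (\<lambda>h. g \<bullet> h)" using frechet_derivative_at[OF assms] by simp
  then have "grad f x = (\<Sum>i\<in>Basis. (g \<bullet> i) *\<^sub>R i)" unfolding grad_def by simp
  then show ?thesis by (simp add: euclidean_representation)
qed

lemma deriv_grad: assumes "f differentiable (at x)"
  shows "(f has_derivative (\<lambda>h. grad f x \<bullet> h)) (at x)"
proof -
  define F where "F = frechet_derivative f (at x)"
  have D: "(f has_derivative F) (at x)" using assms unfolding F_def by (simp add: frechet_derivative_works)
  then have lin: "linear F" using has_derivative_linear by blast
  have "F = (\<lambda>h. grad f x \<bullet> h)"
  proof
    fix h
    have "F h = F (\<Sum>i\<in>Basis. (h \<bullet> i) *\<^sub>R i)" by (simp add: euclidean_representation)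
    also have "\<dots> = (\<Sum>i\<in>Basis. (h \<bullet> i) * F i)" using lin by (simp add: linear_sum linear_cmul)
    also have "\<dots> = (\<Sum>i\<in>Basis. (F i *\<^sub>R i) \<bullet> h)" by (intro sum.cong) (auto simp: inner_commute)
    also have "\<dots> = grad f x \<bullet> h" unfolding grad_def F_def by (simp add: inner_sum_left)
    finally show "F h = grad f x \<bullet> h" .
  qed
  then show ?thesis using D by simp
qed

lemma npow_deriv:
  fixes x :: "'a::euclidean_space" assumes a: "1 < a"
  shows "((\<lambda>x. norm x powr a) has_derivative (\<lambda>h. ((a * norm x powr (a - 2)) *\<^sub>R x) \<bullet> h)) (at x)"
proof (cases "x = 0")
  case False
  then have nx: "0 < norm x" by simp
  have D1: "(norm has_derivative (\<lambda>h. h \<bullet> sgn x)) (at x)" using False by (rule has_derivative_norm)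
  have D2: "((\<lambda>t. t powr a) has_derivative (\<lambda>h. (a * norm x powr (a - 1)) * h)) (at (norm x))"
    using has_field_derivative_imp_has_derivative[OF has_real_derivative_powr[OF nx, of a]] by simp
  have D: "((\<lambda>y. norm y powr a) has_derivative (\<lambda>h. (a * norm x powr (a - 1)) * (h \<bullet> sgn x))) (at x)"
    using has_derivative_compose[OF D1 D2] by simp
  have "norm x powr (a - 1) = norm x powr ((a - 2) + 1)" by simp
  also have "\<dots> = norm x powr (a - 2) * norm x powr 1" by (rule powr_add)
  finally have e: "norm x powr (a - 1) = norm x powr (a - 2) * norm x" by simp
  have "(\<lambda>h. (a * norm x powr (a - 1)) * (h \<bullet> sgn x)) = (\<lambda>h. ((a * norm x powr (a - 2)) *\<^sub>R x) \<bullet> h)"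
    using nx by (auto simp: e sgn_div_norm inner_commute field_simps)
  then show ?thesis using D by simp
next
  case True
  have lim: "((\<lambda>h::'a. norm h powr (a - 1)) \<longlongrightarrow> 0) (at 0)"
    by (rule tendsto_zero_powrI) (auto intro!: tendsto_norm_zero tendsto_ident_at simp: a)
  have ev: "(\<lambda>h::'a. norm (norm (0 + h) powr a - norm (0::'a) powr a - 0) / norm h) = (\<lambda>h. norm h powr (a - 1))"
  proof
    fix h :: 'a show "norm (norm (0 + h) powr a - norm (0::'a) powr a - 0) / norm h = norm h powr (a - 1)"
      by (cases "h = 0") (simp_all add: powr_diff)
  qed
  have "((\<lambda>h::'a. norm (norm (0 + h) powr a - norm (0::'a) powr a - 0) / norm h) \<longlongrightarrow> 0) (at 0)"
    unfolding ev by (rule lim)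
  then have "((\<lambda>y. norm y powr a) has_derivative (\<lambda>h::'a. 0)) (at 0)"
    unfolding has_derivative_at by simp
  then show ?thesis using True by simp
qed

locale L4 =
  fixes \<psi> :: "'a::euclidean_space \<Rightarrow> real" and \<rho> p :: real
  assumes rho: "\<rho> > 0"
    and psi_diff: "\<And>x. \<psi> differentiable (at x)"
    and psi_pcont: "\<And>i. i \<in> Basis \<Longrightarrow> continuous_on UNIV (\<lambda>x. frechet_derivative \<psi> (at x) i)"
    and psi_supp: "closure {x. \<psi> x \<noteq> 0} \<subseteq> ball 0 \<rho>"
    and psi_range: "\<And>x. 0 \<le> \<psi> x \<and> \<psi> x \<le> 1"
    and psi_one: "\<And>x. x \<in> ball 0 (\<rho>/2) \<Longrightarrow> \<psi> x = 1"
    and p1: "1 < p" and pN: "p < real DIM('a)"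
begin

definition "a = p / (p - 1)"
definition "b = (real DIM('a) - p) / p"
definition "\<gamma> = (real DIM('a) - p) / (p - 1)"

lemma a_gt1: "1 < a" using p1 unfolding a_def by (simp add: field_simps)
lemma b_pos: "0 < b" using p1 pN unfolding b_def by simp
lemma gamma_pos: "0 < \<gamma>" using p1 pN unfolding \<gamma>_def by simp
lemma ab: "a * b = \<gamma>" using p1 unfolding a_def b_def \<gamma>_def by (simp add: field_simps)

definition W :: "real \<Rightarrow> 'a \<Rightarrow> real" where
  "W e x = (e powr a + norm x powr a) powr (- b)"

definition gW :: "real \<Rightarrow> 'a \<Rightarrow> 'a" where
  "gW e x = (- b * (e powr a + norm x powr a) powr (- b - 1) * (a * norm x powr (a - 2))) *\<^sub>R x"

definition u :: "real \<Rightarrow> real \<Rightarrow> 'a \<Rightarrow> real" where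
  "u e \<delta> x = \<psi> ((1 / \<delta>) *\<^sub>R x) * W e x"

definition g\<psi> :: "'a \<Rightarrow> 'a" where "g\<psi> = grad \<psi>"

definition gU :: "real \<Rightarrow> real \<Rightarrow> 'a \<Rightarrow> 'a" where
  "gU e \<delta> x = \<psi> ((1 / \<delta>) *\<^sub>R x) *\<^sub>R gW e x + (W e x / \<delta>) *\<^sub>R g\<psi> ((1 / \<delta>) *\<^sub>R x)"

lemma u_fun_eq: "u_fun (real DIM('a)) p \<psi> e \<delta> = u e \<delta>"
  unfolding u_fun_def u_def W_def a_def b_def by (auto simp: minus_divide_left)

lemma psi_deriv: "(\<psi> has_derivative (\<lambda>h. g\<psi> y \<bullet> h)) (at y)"
  unfolding g\<psi>_def by (rule deriv_grad[OF psi_diff])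

lemma gpsi_cont: "continuous_on UNIV g\<psi>"
  unfolding g\<psi>_def grad_def[abs_def]
  by (intro continuous_on_sum continuous_on_scaleR psi_pcont continuous_on_const) auto

lemma gpsi_meas[measurable]: "g\<psi> \<in> borel_measurable borel"
  using gpsi_cont by (rule borel_measurable_continuous_onI)

lemma psi_cont: "continuous_on UNIV \<psi>"
  using psi_diff by (simp add: differentiable_imp_continuous_on differentiable_on_def differentiable_at_withinI)

lemma psi_meas[measurable]: "\<psi> \<in> borel_measurable borel"
  using psi_cont by (rule borel_measurable_continuous_onI)

lemma gpsi_const: assumes "open T" "y \<in> T" "\<And>z. z \<in> T \<Longrightarrow> \<psi> z = c" shows "g\<psi> y = 0"
proof -
  have "((\<lambda>_. c) has_derivative (\<lambda>h. 0 \<bullet> h)) (at y)" using has_derivative_const[of c] by simp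
  then have "(\<psi> has_derivative (\<lambda>h. 0 \<bullet> h)) (at y)"
    by (rule has_derivative_transform_within_open[OF _ assms(1,2)]) (use assms(3) in auto)
  then show ?thesis unfolding g\<psi>_def by (rule grad_eq)
qed

lemma psi_out: assumes "\<rho> \<le> norm y" shows "\<psi> y = 0"
  using psi_supp assms closure_subset[of "{x. \<psi> x \<noteq> 0}"] by force

lemma gpsi_out: assumes "\<rho> \<le> norm y" shows "g\<psi> y = 0"
proof (rule gpsi_const[of "- closure {x. \<psi> x \<noteq> 0}" _ 0])
  show "open (- closure {x. \<psi> x \<noteq> 0})" by auto
  show "y \<in> - closure {x. \<psi> x \<noteq> 0}" using psi_supp assms by force
  show "\<psi> z = 0" if "z \<in> - closure {x. \<psi> x \<noteq> 0}" for z using that closure_subset by force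
qed

lemma gpsi_in: assumes "norm y < \<rho> / 2" shows "g\<psi> y = 0"
  by (rule gpsi_const[of "ball 0 (\<rho>/2)" _ 1]) (use assms psi_one in auto)

lemma gpsi_bound: obtains M where "0 \<le> M" "\<And>y. norm (g\<psi> y) \<le> M"
proof -
  have "compact (g\<psi> ` cball 0 \<rho>)"
    by (intro compact_continuous_image continuous_on_subset[OF gpsi_cont]) auto
  then obtain M where M: "\<And>z. z \<in> g\<psi> ` cball 0 \<rho> \<Longrightarrow> norm z \<le> M"
    using compact_imp_bounded bounded_iff by metis
  have "norm (g\<psi> y) \<le> max M 0" for y
  proof (cases "norm y \<le> \<rho>")
    case True then show ?thesis using M[of "g\<psi> y"] by auto
  next
    case False then show ?thesis using gpsi_out[of y] by auto
  qed
  then show ?thesis using that[of "max M 0"] by auto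
qed

lemma W_deriv: assumes "0 < e" shows "(W e has_derivative (\<lambda>h. gW e x \<bullet> h)) (at x)"
proof -
  define z where "z = e powr a + norm x powr a"
  have zp: "0 < z" unfolding z_def using assms by (simp add: add_pos_nonneg)
  have D1: "((\<lambda>x. e powr a + norm x powr a) has_derivative (\<lambda>h. 0 + ((a * norm x powr (a - 2)) *\<^sub>R x) \<bullet> h)) (at x)"
    by (intro has_derivative_add has_derivative_const npow_deriv a_gt1)
  have D2: "((\<lambda>t. t powr (-b)) has_derivative (\<lambda>h. (- b * z powr (- b - 1)) * h)) (at (e powr a + norm x powr a))"
    unfolding z_def by (rule has_field_derivative_imp_has_derivative[OF has_real_derivative_powr]) (use zp z_def in simp)
  have "(W e has_derivative (\<lambda>h. (- b * z powr (- b - 1)) * (0 + ((a * norm x powr (a - 2)) *\<^sub>R x) \<bullet> h))) (at x)"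
    using has_derivative_compose[OF D1 D2] unfolding W_def[abs_def] by simp
  moreover have "(\<lambda>h. (- b * z powr (- b - 1)) * (0 + ((a * norm x powr (a - 2)) *\<^sub>R x) \<bullet> h)) = (\<lambda>h. gW e x \<bullet> h)"
    unfolding gW_def z_def by (auto simp: mult_ac)
  ultimately show ?thesis by simp
qed

lemma u_deriv: assumes "0 < e" "0 < \<delta>" shows "(u e \<delta> has_derivative (\<lambda>h. gU e \<delta> x \<bullet> h)) (at x)"
proof -
  have D1: "((\<lambda>x. (1/\<delta>) *\<^sub>R x) has_derivative (\<lambda>h. (1/\<delta>) *\<^sub>R h)) (at x)"
    by (intro has_derivative_scaleR_right has_derivative_ident)
  have D2: "((\<lambda>x. \<psi> ((1/\<delta>) *\<^sub>R x)) has_derivative (\<lambda>h. g\<psi> ((1/\<delta>) *\<^sub>R x) \<bullet> ((1/\<delta>) *\<^sub>R h))) (at x)"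
    using has_derivative_compose[OF D1 psi_deriv] by simp
  have "(u e \<delta> has_derivative (\<lambda>h. \<psi> ((1/\<delta>) *\<^sub>R x) * (gW e x \<bullet> h) + (g\<psi> ((1/\<delta>) *\<^sub>R x) \<bullet> ((1/\<delta>) *\<^sub>R h)) * W e x)) (at x)"
    unfolding u_def[abs_def] by (rule has_derivative_mult[OF D2 W_deriv[OF assms(1)]])
  moreover have "(\<lambda>h. \<psi> ((1/\<delta>) *\<^sub>R x) * (gW e x \<bullet> h) + (g\<psi> ((1/\<delta>) *\<^sub>R x) \<bullet> ((1/\<delta>) *\<^sub>R h)) * W e x) = (\<lambda>h. gU e \<delta> x \<bullet> h)"
    unfolding gU_def by (auto simp: inner_add_left algebra_simps)
  ultimately show ?thesis by simp
qed

lemma grad_u: "0 < e \<Longrightarrow> 0 < \<delta> \<Longrightarrow> grad (u e \<delta>) x = gU e \<delta> x"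
  by (rule grad_eq[OF u_deriv])

lemma grad_v: assumes "0 < e" "0 < \<delta>"
  shows "grad (\<lambda>x. u e \<delta> x / L) x = (1 / L) *\<^sub>R gU e \<delta> x"
proof (rule grad_eq)
  have "((\<lambda>x. u e \<delta> x * (1/L)) has_derivative (\<lambda>h. (gU e \<delta> x \<bullet> h) * (1/L))) (at x)"
    by (rule has_derivative_mult_left[OF u_deriv[OF assms]])
  then show "((\<lambda>x. u e \<delta> x / L) has_derivative (\<lambda>h. ((1 / L) *\<^sub>R gU e \<delta> x) \<bullet> h)) (at x)"
    by (simp add: mult_ac)
qed

lemma W_meas[measurable]: "W e \<in> borel_measurable borel"
  unfolding W_def[abs_def] by measurable

lemma gW_meas[measurable]: "gW e \<in> borel_measurable borel"
  unfolding gW_def[abs_def] by measurable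

lemma u_meas[measurable]: "u e \<delta> \<in> borel_measurable borel"
  unfolding u_def[abs_def] by measurable

lemma gU_meas[measurable]: "gU e \<delta> \<in> borel_measurable borel"
  unfolding gU_def[abs_def] by measurable

end


context L4 begin

lemma epa: "0 < e \<Longrightarrow> (e powr a) powr r = e powr (a * r)"
  by (simp add: powr_powr)

lemma Z_pos: "0 < e \<Longrightarrow> 0 < e powr a + norm x powr a"
proof -
  assume "0 < e"
  then have "0 < e powr a" by simp
  moreover have "0 \<le> norm x powr a" by simp
  ultimately show ?thesis by linarith
qed

lemma W_pos: assumes "0 < e" shows "0 < W e x"
proof -
  have "0 < e powr a + norm x powr a" by (rule Z_pos[OF assms])
  then show ?thesis unfolding W_def by simp
qed

lemma W_le_e: assumes "0 < e" shows "W e x \<le> e powr (-\<gamma>)"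
proof -
  have "W e x \<le> (e powr a) powr (-b)" unfolding W_def
    using assms b_pos Z_pos by (intro powr_mono2') auto
  also have "\<dots> = e powr (-\<gamma>)" using assms ab by (simp add: epa)
  finally show ?thesis .
qed

lemma W_le_x: assumes "0 < e" "x \<noteq> 0" shows "W e x \<le> norm x powr (-\<gamma>)"
proof -
  have "W e x \<le> (norm x powr a) powr (-b)" unfolding W_def
    using assms b_pos Z_pos by (intro powr_mono2') auto
  also have "\<dots> = norm x powr (-\<gamma>)" using assms ab by (simp add: epa)
  finally show ?thesis .
qed

lemma W_ge: assumes "0 < e" "norm x \<le> e" shows "2 powr (-b) * e powr (-\<gamma>) \<le> W e x"
proof -
  have "norm x powr a \<le> e powr a" using assms a_gt1 by (intro powr_mono2) auto
  then have "(2 * e powr a) powr (-b) \<le> W e x" unfolding W_def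
    using assms b_pos Z_pos by (intro powr_mono2') auto
  moreover have "(2 * e powr a) powr (-b) = 2 powr (-b) * e powr (-\<gamma>)"
    using assms ab by (simp add: powr_mult epa)
  ultimately show ?thesis by simp
qed

lemma norm_gW: assumes "0 < e"
  shows "norm (gW e x) = a * b * (e powr a + norm x powr a) powr (- b - 1) * norm x powr (a - 1)"
proof (cases "x = 0")
  case True then show ?thesis by (simp add: gW_def)
next
  case False
  then have nx: "0 < norm x" by simp
  have "norm x powr (a - 1) = norm x powr ((a - 2) + 1)" by simp
  also have "\<dots> = norm x powr (a - 2) * norm x powr 1" by (rule powr_add)
  finally have e: "norm x powr (a - 1) = norm x powr (a - 2) * norm x" by simp
  have "norm (gW e x) = \<bar>- b * (e powr a + norm x powr a) powr (- b - 1) * (a * norm x powr (a - 2))\<bar> * norm x"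
    unfolding gW_def by simp
  also have "\<dots> = b * (e powr a + norm x powr a) powr (- b - 1) * (a * norm x powr (a - 2)) * norm x"
    using b_pos a_gt1 by (simp add: abs_mult)
  also have "\<dots> = a * b * (e powr a + norm x powr a) powr (- b - 1) * norm x powr (a - 1)"
    by (simp add: e mult_ac)
  finally show ?thesis .
qed

lemma gW_le_e: assumes "0 < e" "norm x \<le> e" shows "norm (gW e x) \<le> a * b * e powr (-\<gamma> - 1)"
proof -
  have "(e powr a + norm x powr a) powr (- b - 1) \<le> (e powr a) powr (-b - 1)"
    using assms b_pos Z_pos by (intro powr_mono2') auto
  moreover have "norm x powr (a - 1) \<le> e powr (a - 1)" using assms a_gt1 by (intro powr_mono2) auto
  ultimately have "(e powr a + norm x powr a) powr (- b - 1) * norm x powr (a - 1) \<le> (e powr a) powr (-b - 1) * e powr (a - 1)"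
    by (intro mult_mono) auto
  also have "\<dots> = e powr (a * (-b - 1) + (a - 1))" using assms by (simp add: epa powr_add)
  also have "a * (-b - 1) + (a - 1) = -\<gamma> - 1" using ab by (simp add: algebra_simps)
  finally have "(e powr a + norm x powr a) powr (- b - 1) * norm x powr (a - 1) \<le> e powr (-\<gamma> - 1)" .
  then show ?thesis unfolding norm_gW[OF assms(1)] using a_gt1 b_pos
    by (simp add: mult.assoc mult_left_mono)
qed

lemma gW_le_x: assumes "0 < e" "x \<noteq> 0" shows "norm (gW e x) \<le> a * b * norm x powr (-\<gamma> - 1)"
proof -
  have "(e powr a + norm x powr a) powr (- b - 1) \<le> (norm x powr a) powr (-b - 1)"
    using assms b_pos Z_pos by (intro powr_mono2') auto
  then have "(e powr a + norm x powr a) powr (- b - 1) * norm x powr (a - 1) \<le> (norm x powr a) powr (-b - 1) * norm x powr (a - 1)"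
    by (intro mult_right_mono) auto
  also have "\<dots> = norm x powr (a * (-b - 1) + (a - 1))" using assms by (simp add: epa powr_add)
  also have "a * (-b - 1) + (a - 1) = -\<gamma> - 1" using ab by (simp add: algebra_simps)
  finally have "(e powr a + norm x powr a) powr (- b - 1) * norm x powr (a - 1) \<le> norm x powr (-\<gamma> - 1)" .
  then show ?thesis unfolding norm_gW[OF assms(1)] using a_gt1 b_pos
    by (simp add: mult.assoc mult_left_mono)
qed

lemma gW_ge: assumes "0 < e" "e \<le> norm x" shows "a * b * 2 powr (-b - 1) * norm x powr (-\<gamma> - 1) \<le> norm (gW e x)"
proof -
  have nx: "0 < norm x" using assms by linarith
  have "e powr a \<le> norm x powr a" using assms a_gt1 by (intro powr_mono2) auto
  then have "(2 * norm x powr a) powr (-b - 1) \<le> (e powr a + norm x powr a) powr (- b - 1)"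
    using assms b_pos nx Z_pos by (intro powr_mono2') auto
  then have "(2 * norm x powr a) powr (-b - 1) * norm x powr (a - 1) \<le> (e powr a + norm x powr a) powr (- b - 1) * norm x powr (a - 1)"
    by (intro mult_right_mono) auto
  moreover have "(2 * norm x powr a) powr (-b - 1) * norm x powr (a - 1) = 2 powr (-b - 1) * norm x powr (a * (-b - 1) + (a - 1))"
    using nx by (simp add: powr_mult epa powr_add)
  moreover have "a * (-b - 1) + (a - 1) = -\<gamma> - 1" using ab by (simp add: algebra_simps)
  ultimately have "2 powr (-b - 1) * norm x powr (-\<gamma> - 1) \<le> (e powr a + norm x powr a) powr (- b - 1) * norm x powr (a - 1)" by simp
  then show ?thesis unfolding norm_gW[OF assms(1)] using a_gt1 b_pos
    by (simp add: mult.assoc mult_left_mono)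
qed

lemma psi_scaled_out: assumes "0 < \<delta>" "\<delta> * \<rho> \<le> norm x" shows "\<psi> ((1/\<delta>) *\<^sub>R x) = 0" "g\<psi> ((1/\<delta>) *\<^sub>R x) = 0"
proof -
  have "\<rho> \<le> norm ((1/\<delta>) *\<^sub>R x)" using assms by (simp add: field_simps)
  then show "\<psi> ((1/\<delta>) *\<^sub>R x) = 0" "g\<psi> ((1/\<delta>) *\<^sub>R x) = 0" using psi_out gpsi_out by auto
qed

lemma psi_scaled_in: assumes "0 < \<delta>" "norm x < \<delta> * \<rho> / 2" shows "\<psi> ((1/\<delta>) *\<^sub>R x) = 1" "g\<psi> ((1/\<delta>) *\<^sub>R x) = 0"
proof -
  have "norm ((1/\<delta>) *\<^sub>R x) < \<rho> / 2" using assms by (simp add: field_simps)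
  then show "\<psi> ((1/\<delta>) *\<^sub>R x) = 1" "g\<psi> ((1/\<delta>) *\<^sub>R x) = 0" using psi_one gpsi_in by auto
qed

lemma u_nonneg: "0 < e \<Longrightarrow> 0 \<le> u e \<delta> x"
  unfolding u_def using psi_range W_pos by (simp add: less_imp_le)

lemma u_le_W: "0 < e \<Longrightarrow> u e \<delta> x \<le> W e x"
  unfolding u_def using psi_range[of "(1/\<delta>) *\<^sub>R x"] W_pos[of e x]
  by (simp add: mult_left_le_one_le less_imp_le)

lemma u_out: "0 < \<delta> \<Longrightarrow> \<delta> * \<rho> \<le> norm x \<Longrightarrow> u e \<delta> x = 0"
  unfolding u_def using psi_scaled_out by simp

lemma u_in: "0 < \<delta> \<Longrightarrow> norm x < \<delta> * \<rho> / 2 \<Longrightarrow> u e \<delta> x = W e x"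
  unfolding u_def using psi_scaled_in by simp

lemma gU_in: "0 < \<delta> \<Longrightarrow> norm x < \<delta> * \<rho> / 2 \<Longrightarrow> gU e \<delta> x = gW e x"
  unfolding gU_def using psi_scaled_in by simp

lemma gU_bound: assumes "0 < e" "0 < \<delta>" "\<And>y. norm (g\<psi> y) \<le> M"
  shows "norm (gU e \<delta> x) \<le> indicator (ball 0 (\<delta> * \<rho>)) x * norm (gW e x)
     + indicator (ann (\<delta> * \<rho> / 2) (\<delta> * \<rho>)) x * (M / \<delta> * W e x)"
proof (cases "norm x < \<delta> * \<rho> / 2")
  case True
  have "0 < \<delta> * \<rho>" using assms rho by simp
  then have "norm x < \<delta> * \<rho>" using True by linarith
  then show ?thesis using True gU_in[OF assms(2) True] by (simp add: ann_def indicator_def)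
next
  case F1: False
  show ?thesis
  proof (cases "norm x < \<delta> * \<rho>")
    case True
    have "norm (gU e \<delta> x) \<le> norm (\<psi> ((1 / \<delta>) *\<^sub>R x) *\<^sub>R gW e x) + norm ((W e x / \<delta>) *\<^sub>R g\<psi> ((1 / \<delta>) *\<^sub>R x))"
      unfolding gU_def by (rule norm_triangle_ineq)
    also have "norm (\<psi> ((1 / \<delta>) *\<^sub>R x) *\<^sub>R gW e x) \<le> norm (gW e x)"
      using psi_range[of "(1 / \<delta>) *\<^sub>R x"] by (simp add: mult_left_le_one_le)
    also have "norm ((W e x / \<delta>) *\<^sub>R g\<psi> ((1 / \<delta>) *\<^sub>R x)) \<le> W e x / \<delta> * M"
      using W_pos[OF assms(1), of x] assms(2) assms(3)[of "(1 / \<delta>) *\<^sub>R x"]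
      by (simp add: mult_left_mono divide_right_mono less_imp_le)
    finally show ?thesis using True F1 by (simp add: ann_def indicator_def mult_ac)
  next
    case False
    then have "gU e \<delta> x = 0" unfolding gU_def using psi_scaled_out[OF assms(2)] by simp
    then show ?thesis using False by (simp add: ann_def indicator_def)
  qed
qed

end


lemma pw2: "((2::real)^k) powr r = (2 powr r)^k"
proof -
  have "((2::real)^k) powr r = (2 powr real k) powr r" by (simp add: powr_realpow)
  also have "\<dots> = 2 powr (r * real k)" by (simp add: powr_powr mult.commute)
  also have "\<dots> = (2 powr r) powr real k" by (simp add: powr_powr)
  also have "\<dots> = (2 powr r)^k" by (simp add: powr_realpow)
  finally show ?thesis .
qed

lemma pwm: "0 < (e::real) \<Longrightarrow> (e * 2^k) powr r = e powr r * (2 powr r)^k"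
  by (simp add: powr_mult pw2)

lemma step_int_sh:
  assumes "0 < e"
  shows "integral\<^sup>L lborel (\<lambda>x::'a::euclidean_space. \<Sum>k<K. C * (e*2^k) powr (-\<kappa>) * indicator (sh e k) x)
    = C * unit_ball_vol DIM('a) * (2^DIM('a) - 1) * e powr (real DIM('a) - \<kappa>) * (\<Sum>k<K. (2 powr (real DIM('a) - \<kappa>))^k)"
proof -
  have "integral\<^sup>L lborel (\<lambda>x::'a. \<Sum>k<K. C * (e*2^k) powr (-\<kappa>) * indicator (sh e k) x)
     = (\<Sum>k<K. C * (e*2^k) powr (-\<kappa>) * measure lborel (sh e k :: 'a set))"
    unfolding sh_def by (rule step_integral)
  also have "\<dots> = (\<Sum>k<K. C * unit_ball_vol DIM('a) * (2^DIM('a) - 1) * e powr (real DIM('a) - \<kappa>) * (2 powr (real DIM('a) - \<kappa>))^k)"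
  proof (intro sum.cong refl)
    fix k
    have e1: "e ^ DIM('a) = e powr real DIM('a)" using assms by (simp add: powr_realpow)
    have e2: "(2::real) ^ DIM('a) = 2 powr real DIM('a)" by (simp add: powr_realpow)
    have e3: "(2 powr real DIM('a)) ^ k * (2 powr (-\<kappa>))^k = (2 powr (real DIM('a) - \<kappa>))^k"
    proof -
      have "(2::real) powr real DIM('a) * 2 powr (-\<kappa>) = 2 powr (real DIM('a) - \<kappa>)"
        by (metis powr_add diff_conv_add_uminus)
      then show ?thesis by (metis power_mult_distrib)
    qed
    have e4: "e powr (-\<kappa>) * e powr real DIM('a) = e powr (real DIM('a) - \<kappa>)"
      by (metis powr_add diff_conv_add_uminus add.commute)
    show "C * (e*2^k) powr (-\<kappa>) * measure lborel (sh e k :: 'a set) = C * unit_ball_vol DIM('a) * (2^DIM('a) - 1) * e powr (real DIM('a) - \<kappa>) * (2 powr (real DIM('a) - \<kappa>))^k"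
      unfolding measure_sh[OF assms] pwm[OF assms] e1 e2 e3[symmetric] e4[symmetric]
      by (simp only: mult_ac)
  qed
  also have "\<dots> = C * unit_ball_vol DIM('a) * (2^DIM('a) - 1) * e powr (real DIM('a) - \<kappa>) * (\<Sum>k<K. (2 powr (real DIM('a) - \<kappa>))^k)"
    by (simp add: sum_distrib_left)
  finally show ?thesis .
qed

lemma step_int_sh_integrable: "integrable lborel (\<lambda>x::'a::euclidean_space. \<Sum>k<K. C * (e*2^k) powr (-\<kappa>) * indicator (sh e k) x)"
  unfolding sh_def by (rule step_integrable)

lemma ind_nonneg_sum: "0 \<le> C \<Longrightarrow> 0 \<le> (\<Sum>k<K. C * (e*2^k) powr (-\<kappa>) * indicator (sh e k) x)"
  by (intro sum_nonneg) auto

lemma dom_integral: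
  fixes f H :: "'a::euclidean_space \<Rightarrow> real"
  assumes "integrable lborel H" "f \<in> borel_measurable lborel" "\<And>x. 0 \<le> f x" "\<And>x. f x \<le> H x"
  shows "integrable lborel f" "integral\<^sup>L lborel f \<le> integral\<^sup>L lborel H"
proof -
  have "AE x in lborel. norm (f x) \<le> norm (H x)"
  proof (rule AE_I2)
    fix x
    have "0 \<le> f x" "f x \<le> H x" using assms(3,4) by auto
    then show "norm (f x) \<le> norm (H x)" by simp
  qed
  then show i: "integrable lborel f"
    by (rule Bochner_Integration.integrable_bound[OF assms(1,2)])
  show "integral\<^sup>L lborel f \<le> integral\<^sup>L lborel H"
    by (rule integral_mono[OF i assms(1)]) (use assms(4) in auto)
qed



context L4 begin

lemma u_powr_meas: "(\<lambda>x. u e \<delta> x powr t) \<in> borel_measurable lborel"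
  by measurable

lemma P_est:
  assumes t: "0 < t" "real DIM('a) < \<gamma> * t"
  shows "\<exists>c C. 0 < c \<and> 0 < C \<and> (\<forall>e \<delta>. 0 < e \<longrightarrow> 0 < \<delta> \<longrightarrow> e \<le> \<delta> * \<rho> / 2 \<longrightarrow>
     integrable lborel (\<lambda>x. u e \<delta> x powr t) \<and>
     c * e powr (real DIM('a) - \<gamma> * t) \<le> integral\<^sup>L lborel (\<lambda>x. u e \<delta> x powr t) \<and>
     integral\<^sup>L lborel (\<lambda>x. u e \<delta> x powr t) \<le> C * e powr (real DIM('a) - \<gamma> * t))"
proof -
  define d where "d = real DIM('a)"
  define \<kappa> where "\<kappa> = \<gamma> * t"
  define \<omega> where "\<omega> = unit_ball_vol (real DIM('a))"
  define x0 where "x0 = (2::real) powr (d - \<kappa>)"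
  have \<omega>: "0 < \<omega>" unfolding \<omega>_def by simp
  have kp: "0 < \<kappa>" unfolding \<kappa>_def using t gamma_pos by simp
  have x0: "0 < x0" "x0 < 1" unfolding x0_def using t by (auto simp: d_def \<kappa>_def intro!: powr_less_one)
  have d2: "1 \<le> (2::real)^DIM('a)" by simp
  define C where "C = \<omega> * (1 + (2^DIM('a) - 1) / (1 - x0))"
  define c where "c = 2 powr (-b * t) * \<omega>"
  have Cp: "0 < C" unfolding C_def using \<omega> x0 d2 by (intro mult_pos_pos add_pos_nonneg) auto
  have cp: "0 < c" unfolding c_def using \<omega> by simp
  show ?thesis
  proof (rule exI[of _ c], rule exI[of _ C], intro conjI[OF cp] conjI[OF Cp] allI impI)
    fix e \<delta> :: real assume e: "0 < e" and dl: "0 < \<delta>" and ed: "e \<le> \<delta> * \<rho> / 2"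
    obtain K where K: "\<delta> * \<rho> / e < 2^K" using real_arch_pow[of 2 "\<delta> * \<rho> / e"] by auto
    then have K': "\<delta> * \<rho> < e * 2^K" using e by (simp add: field_simps)
    define H where "H x = e powr (-\<kappa>) * indicator (ball 0 e) x + (\<Sum>k<K. 1 * (e*2^k) powr (-\<kappa>) * indicator (sh e k) x)" for x :: 'a
    have Hint: "integrable lborel H" unfolding H_def
      by (intro Bochner_Integration.integrable_add integrable_ind_ball step_int_sh_integrable)
    have Hval: "integral\<^sup>L lborel H = \<omega> * e powr (d - \<kappa>) * (1 + (2^DIM('a) - 1) * (\<Sum>k<K. x0^k))"
    proof -
      have "integral\<^sup>L lborel H = integral\<^sup>L lborel (\<lambda>x::'a. e powr (-\<kappa>) * indicator (ball 0 e) x)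
          + integral\<^sup>L lborel (\<lambda>x::'a. \<Sum>k<K. 1 * (e*2^k) powr (-\<kappa>) * indicator (sh e k) x)"
        unfolding H_def by (intro Bochner_Integration.integral_add integrable_ind_ball step_int_sh_integrable)
      also have "\<dots> = e powr (-\<kappa>) * (\<omega> * e ^ DIM('a)) + \<omega> * (2^DIM('a) - 1) * e powr (d - \<kappa>) * (\<Sum>k<K. x0^k)"
        unfolding integral_ind_ball step_int_sh[OF e] using e
        by (simp add: measure_ball0 \<omega>_def d_def x0_def)
      also have "e powr (-\<kappa>) * e ^ DIM('a) = e powr (d - \<kappa>)"
        using e by (simp add: d_def powr_realpow[symmetric] powr_add[symmetric])
      ultimately show ?thesis by (simp add: algebra_simps)
    qed
    have Hle: "integral\<^sup>L lborel H \<le> C * e powr (d - \<kappa>)"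
    proof -
      have "(\<Sum>k<K. x0^k) \<le> 1 / (1 - x0)" using x0 by (intro geo_neg) auto
      then have "1 + (2^DIM('a) - 1) * (\<Sum>k<K. x0^k) \<le> 1 + (2^DIM('a) - 1) * (1 / (1 - x0))"
        using d2 by (intro add_left_mono mult_left_mono) auto
      then show ?thesis unfolding Hval C_def using \<omega> e by (simp add: mult_left_mono)
    qed
    have upt: "u e \<delta> x powr t \<le> H x" for x
    proof -
      have Hnn: "0 \<le> (\<Sum>k<K. 1 * (e*2^k) powr (-\<kappa>) * indicator (sh e k) x)" by (rule ind_nonneg_sum) simp
      have un: "0 \<le> u e \<delta> x" by (rule u_nonneg[OF e])
      consider "norm x < e" | "e \<le> norm x" "norm x < \<delta> * \<rho>" | "\<delta> * \<rho> \<le> norm x" by linarith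
      then show ?thesis
      proof cases
        case 1
        have "u e \<delta> x \<le> e powr (-\<gamma>)" using u_le_W[OF e] W_le_e[OF e] order_trans by blast
        then have "u e \<delta> x powr t \<le> (e powr (-\<gamma>)) powr t" using un t by (intro powr_mono2) auto
        also have "\<dots> = e powr (-\<kappa>)" using e by (simp add: powr_powr \<kappa>_def)
        finally show ?thesis using 1 Hnn unfolding H_def by simp
      next
        case 2
        then have x0': "x \<noteq> 0" using e by auto
        have "norm x < e * 2^K" using K' 2 by linarith
        then obtain j where j: "j < K" "x \<in> sh e j" using sh_cover[OF e 2(1)] by blast
        have "u e \<delta> x \<le> norm x powr (-\<gamma>)" using u_le_W[OF e] W_le_x[OF e x0'] order_trans by blast
        then have "u e \<delta> x powr t \<le> (norm x powr (-\<gamma>)) powr t" using un t by (intro powr_mono2) auto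
        also have "\<dots> = norm x powr (-\<kappa>)" using x0' by (simp add: powr_powr \<kappa>_def)
        also have "\<dots> \<le> (e*2^j) powr (-\<kappa>)" using j e kp by (intro powr_mono2') (auto simp: sh_def ann_def)
        also have "\<dots> = (\<Sum>k<K. 1 * (e*2^k) powr (-\<kappa>) * indicator (sh e k) x)"
          using sum_ind_single[OF e j(2) j(1), of "\<lambda>k. 1 * (e*2^k) powr (-\<kappa>)"] by simp
        finally have "u e \<delta> x powr t \<le> (\<Sum>k<K. 1 * (e*2^k) powr (-\<kappa>) * indicator (sh e k) x)" .
        moreover have "indicator (ball 0 e) x = (0::real)" using 2 by (simp add: indicator_def)
        ultimately show ?thesis unfolding H_def by simp
      next
        case 3
        then have "u e \<delta> x = 0" by (rule u_out[OF dl])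
        then show ?thesis using t Hnn unfolding H_def by simp
      qed
    qed
    have unn: "0 \<le> u e \<delta> x powr t" for x by simp
    note D = dom_integral[OF Hint u_powr_meas unn upt]
    have R1: "integrable lborel (\<lambda>x. u e \<delta> x powr t)" by (rule D(1))
    have R2: "integral\<^sup>L lborel (\<lambda>x. u e \<delta> x powr t) \<le> C * e powr (real DIM('a) - \<gamma> * t)"
      using D(2) Hle by (simp add: d_def \<kappa>_def)
    define L where "L x = (2 powr (-b) * e powr (-\<gamma>)) powr t * indicator (ball 0 e) x" for x :: 'a
    have Lle: "L x \<le> u e \<delta> x powr t" for x
    proof (cases "norm x < e")
      case True
      then have "norm x < \<delta> * \<rho> / 2" using ed by linarith
      then have "u e \<delta> x = W e x" by (rule u_in[OF dl])
      moreover have "2 powr (-b) * e powr (-\<gamma>) \<le> W e x" using W_ge[OF e] True by simp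
      ultimately have "(2 powr (-b) * e powr (-\<gamma>)) powr t \<le> u e \<delta> x powr t" using t by (intro powr_mono2) auto
      then show ?thesis unfolding L_def using True by simp
    qed (simp add: L_def)
    have "integral\<^sup>L lborel L \<le> integral\<^sup>L lborel (\<lambda>x. u e \<delta> x powr t)"
    proof (rule integral_mono[OF _ D(1)])
      show "integrable lborel L" unfolding L_def[abs_def] by (rule integrable_ind_ball)
    qed (rule Lle)
    moreover have "integral\<^sup>L lborel L = c * e powr (d - \<kappa>)"
    proof -
      have "integral\<^sup>L lborel L = (2 powr (-b) * e powr (-\<gamma>)) powr t * (\<omega> * e ^ DIM('a))"
        unfolding L_def integral_ind_ball using e by (simp add: measure_ball0 \<omega>_def)
      also have "(2 powr (-b) * e powr (-\<gamma>)) powr t = 2 powr (-b * t) * e powr (-\<kappa>)"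
        using e by (simp add: powr_mult powr_powr \<kappa>_def)
      also have "e ^ DIM('a) = e powr d" using e by (simp add: d_def powr_realpow)
      finally show ?thesis unfolding c_def using e
        by (simp add: mult_ac powr_add[symmetric])
    qed
    ultimately have R3: "c * e powr (real DIM('a) - \<gamma> * t) \<le> integral\<^sup>L lborel (\<lambda>x. u e \<delta> x powr t)"
      by (simp add: d_def \<kappa>_def)
    show "integrable lborel (\<lambda>x. u e \<delta> x powr t) \<and>
     c * e powr (real DIM('a) - \<gamma> * t) \<le> integral\<^sup>L lborel (\<lambda>x. u e \<delta> x powr t) \<and>
     integral\<^sup>L lborel (\<lambda>x. u e \<delta> x powr t) \<le> C * e powr (real DIM('a) - \<gamma> * t)"
      using R1 R2 R3 by blast
  qed
qed

end


context L4 begin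

lemma gU_powr_meas: "(\<lambda>x. norm (gU e \<delta> x) powr q) \<in> borel_measurable lborel"
  by measurable

lemma powr_pow_mult: "0 \<le> (A::real) \<Longrightarrow> 0 < y \<Longrightarrow> (A * y powr r) powr q = A powr q * y powr (r * q)"
  by (simp add: powr_mult powr_powr)

lemma G_est:
  assumes q: "0 < q"
  shows "\<exists>C1 C3 c0. 0 < C1 \<and> 0 < C3 \<and> 0 < c0 \<and> (\<forall>e \<delta>. 0 < e \<longrightarrow> 0 < \<delta> \<longrightarrow>
     integrable lborel (\<lambda>x. norm (gU e \<delta> x) powr q) \<and>
     (\<forall>K. \<delta> * \<rho> \<le> e * 2^K \<longrightarrow> integral\<^sup>L lborel (\<lambda>x. norm (gU e \<delta> x) powr q)
         \<le> C1 * e powr (real DIM('a) - q * (\<gamma> + 1)) * (1 + (\<Sum>k<K. (2 powr (real DIM('a) - q * (\<gamma> + 1)))^k))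
           + C3 * \<delta> powr (real DIM('a) - q * (\<gamma> + 1))) \<and>
     (\<forall>K. e * 2^K \<le> \<delta> * \<rho> / 2 \<longrightarrow>
        c0 * e powr (real DIM('a) - q * (\<gamma> + 1)) * (\<Sum>k<K. (2 powr (real DIM('a) - q * (\<gamma> + 1)))^k)
        \<le> integral\<^sup>L lborel (\<lambda>x. norm (gU e \<delta> x) powr q)))"
proof -
  obtain M where M: "0 \<le> M" "\<And>y. norm (g\<psi> y) \<le> M" using gpsi_bound by blast
  define d where "d = real DIM('a)"
  define \<kappa> where "\<kappa> = q * (\<gamma> + 1)"
  define \<omega> where "\<omega> = unit_ball_vol (real DIM('a))"
  define x0 where "x0 = (2::real) powr (d - \<kappa>)"
  define Mc where "Mc = M * (\<rho> / 2) powr (-\<gamma>)"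
  have \<omega>: "0 < \<omega>" unfolding \<omega>_def by simp
  have kq: "(-\<gamma> - 1) * q = -\<kappa>" unfolding \<kappa>_def by (simp add: algebra_simps)
  have kp: "0 < \<kappa>" unfolding \<kappa>_def using q gamma_pos by simp
  have x0: "0 < x0" unfolding x0_def by simp
  have Mc: "0 \<le> Mc" unfolding Mc_def using M by simp
  have abp: "0 < a * b" using a_gt1 b_pos by simp
  have d2: "2 \<le> (2::real)^DIM('a)"
  proof -
    have "(2::real)^1 \<le> 2^DIM('a)" by (intro power_increasing) (auto simp: DIM_positive)
    then show ?thesis by simp
  qed
  define C1 where "C1 = 2 powr q * (a * b) powr q * \<omega> * 2^DIM('a)"
  define C3 where "C3 = 2 powr q * \<omega> * (Mc powr q * \<rho> ^ DIM('a) + 1)"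
  define c1 where "c1 = (a * b * 2 powr (-b - 1) * 2 powr (-\<gamma> - 1)) powr q"
  define c0 where "c0 = c1 * \<omega> * (2^DIM('a) - 1)"
  have C1p: "0 < C1" unfolding C1_def using \<omega> abp by (intro mult_pos_pos) auto
  have C3p: "0 < C3" unfolding C3_def using \<omega> rho by (intro mult_pos_pos add_nonneg_pos) auto
  have c1p: "0 < c1" unfolding c1_def using abp a_gt1 b_pos by simp
  have c0p: "0 < c0" unfolding c0_def using c1p \<omega> d2 by simp
  show ?thesis
  proof (rule exI[of _ C1], rule exI[of _ C3], rule exI[of _ c0], intro conjI[OF C1p] conjI[OF C3p] conjI[OF c0p] allI impI)
    fix e \<delta> :: real assume e: "0 < e" and dl: "0 < \<delta>"
    have dr: "0 < \<delta> * \<rho>" using dl rho by simp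
    have UP: "integrable lborel (\<lambda>x. norm (gU e \<delta> x) powr q) \<and> integral\<^sup>L lborel (\<lambda>x. norm (gU e \<delta> x) powr q)
         \<le> C1 * e powr (d - \<kappa>) * (1 + (\<Sum>k<K. x0^k)) + C3 * \<delta> powr (d - \<kappa>)"
      if K': "\<delta> * \<rho> \<le> e * 2^K" for K
    proof -
      define T1 where "T1 x = (a * b * e powr (-\<gamma> - 1)) powr q * indicator (ball 0 e) x" for x :: 'a
      define T2 where "T2 x = (\<Sum>k<K. (a * b) powr q * (e*2^k) powr (-\<kappa>) * indicator (sh e k) x)" for x :: 'a
      define T3 where "T3 x = (Mc * \<delta> powr (-\<gamma> - 1)) powr q * indicator (ball 0 (\<delta> * \<rho>)) x" for x :: 'a
      define H where "H x = 2 powr q * (T1 x + T2 x + T3 x)" for x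
      have T2nn: "0 \<le> T2 x" for x unfolding T2_def by (rule ind_nonneg_sum) simp
      have T1nn: "0 \<le> T1 x" for x unfolding T1_def by simp
      have T3nn: "0 \<le> T3 x" for x unfolding T3_def by simp
      have i1: "integrable lborel T1" unfolding T1_def[abs_def] by (rule integrable_ind_ball)
      have i2: "integrable lborel T2" unfolding T2_def[abs_def] by (rule step_int_sh_integrable)
      have i3: "integrable lborel T3" unfolding T3_def[abs_def] by (rule integrable_ind_ball)
      have Hint: "integrable lborel H" unfolding H_def[abs_def]
        by (intro integrable_mult_right Bochner_Integration.integrable_add i1 i2 i3)
      have v1: "integral\<^sup>L lborel T1 = (a * b) powr q * \<omega> * e powr (d - \<kappa>)"
      proof -
        have "integral\<^sup>L lborel T1 = (a * b * e powr (-\<gamma> - 1)) powr q * (\<omega> * e ^ DIM('a))"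
          unfolding T1_def[abs_def] integral_ind_ball using e by (simp add: measure_ball0 \<omega>_def)
        also have "(a * b * e powr (-\<gamma> - 1)) powr q = (a * b) powr q * e powr (-\<kappa>)"
          by (subst powr_pow_mult) (use e abp in \<open>simp_all add: kq\<close>)
        also have "e ^ DIM('a) = e powr d" using e by (simp add: d_def powr_realpow)
        finally show ?thesis by (simp add: mult_ac powr_add[symmetric])
      qed
      have v2: "integral\<^sup>L lborel T2 = (a * b) powr q * \<omega> * (2^DIM('a) - 1) * e powr (d - \<kappa>) * (\<Sum>k<K. x0^k)"
        unfolding T2_def[abs_def] step_int_sh[OF e] by (simp add: \<omega>_def d_def x0_def)
      have v3: "integral\<^sup>L lborel T3 = \<omega> * Mc powr q * \<rho> ^ DIM('a) * \<delta> powr (d - \<kappa>)"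
      proof -
        have "integral\<^sup>L lborel T3 = (Mc * \<delta> powr (-\<gamma> - 1)) powr q * (\<omega> * (\<delta> * \<rho>) ^ DIM('a))"
          unfolding T3_def[abs_def] integral_ind_ball using dr by (simp add: measure_ball0 \<omega>_def)
        also have "(Mc * \<delta> powr (-\<gamma> - 1)) powr q = Mc powr q * \<delta> powr (-\<kappa>)"
          by (subst powr_pow_mult) (use dl Mc in \<open>simp_all add: kq\<close>)
        also have "(\<delta> * \<rho>) ^ DIM('a) = \<delta> powr d * \<rho> ^ DIM('a)" using dl by (simp add: d_def powr_realpow power_mult_distrib)
        finally show ?thesis by (simp add: mult_ac powr_add[symmetric])
      qed
      have ep: "0 < e powr (d - \<kappa>)" "0 < \<delta> powr (d - \<kappa>)" using e dl by auto
      have S0: "0 \<le> (\<Sum>k<K. x0^k)" using x0 by (simp add: sum_nonneg)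
      have Hval: "integral\<^sup>L lborel H \<le> C1 * e powr (d - \<kappa>) * (1 + (\<Sum>k<K. x0^k)) + C3 * \<delta> powr (d - \<kappa>)"
      proof -
        have "integral\<^sup>L lborel H = 2 powr q * (integral\<^sup>L lborel T1 + integral\<^sup>L lborel T2 + integral\<^sup>L lborel T3)"
          unfolding H_def[abs_def] using i1 i2 i3 by simp
        also have "\<dots> = 2 powr q * (a * b) powr q * \<omega> * e powr (d - \<kappa>) * (1 + (2^DIM('a) - 1) * (\<Sum>k<K. x0^k))
              + 2 powr q * \<omega> * Mc powr q * \<rho> ^ DIM('a) * \<delta> powr (d - \<kappa>)"
          unfolding v1 v2 v3 by (simp add: algebra_simps)
        also have "2 powr q * (a * b) powr q * \<omega> * e powr (d - \<kappa>) * (1 + (2^DIM('a) - 1) * (\<Sum>k<K. x0^k))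
             \<le> C1 * e powr (d - \<kappa>) * (1 + (\<Sum>k<K. x0^k))"
        proof -
          have "1 + (2^DIM('a) - 1) * (\<Sum>k<K. x0^k) \<le> 2^DIM('a) * (1 + (\<Sum>k<K. x0^k))"
            using d2 S0 by (simp add: algebra_simps)
          moreover have "0 \<le> 2 powr q * (a * b) powr q * \<omega> * e powr (d - \<kappa>)" using ep \<omega> by simp
          ultimately have "2 powr q * (a * b) powr q * \<omega> * e powr (d - \<kappa>) * (1 + (2^DIM('a) - 1) * (\<Sum>k<K. x0^k))
              \<le> 2 powr q * (a * b) powr q * \<omega> * e powr (d - \<kappa>) * (2^DIM('a) * (1 + (\<Sum>k<K. x0^k)))"
            by (rule mult_left_mono)
          also have "\<dots> = C1 * e powr (d - \<kappa>) * (1 + (\<Sum>k<K. x0^k))" unfolding C1_def by (simp only: mult_ac)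
          finally show ?thesis .
        qed
        also have "2 powr q * \<omega> * Mc powr q * \<rho> ^ DIM('a) * \<delta> powr (d - \<kappa>) \<le> C3 * \<delta> powr (d - \<kappa>)"
          unfolding C3_def using ep \<omega> by (simp add: algebra_simps)
        finally show ?thesis by simp
      qed
      have pt: "norm (gU e \<delta> x) powr q \<le> H x" for x
      proof -
        define A where "A = indicator (ball 0 (\<delta> * \<rho>)) x * norm (gW e x)"
        define B where "B = indicator (ann (\<delta> * \<rho> / 2) (\<delta> * \<rho>)) x * (M / \<delta> * W e x)"
        have An: "0 \<le> A" unfolding A_def by simp
        have Bn: "0 \<le> B" unfolding B_def using M dl W_pos[OF e, of x] by simp
        have "norm (gU e \<delta> x) \<le> A + B" unfolding A_def B_def by (rule gU_bound[OF e dl M(2)])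
        then have "norm (gU e \<delta> x) powr q \<le> (A + B) powr q" using q by (intro powr_mono2) auto
        also have "\<dots> \<le> 2 powr q * (A powr q + B powr q)" by (rule powr_sum_le[OF An Bn q])
        also have "A powr q \<le> T1 x + T2 x"
        proof -
          consider "norm x < e" | "e \<le> norm x" "norm x < \<delta> * \<rho>" | "\<delta> * \<rho> \<le> norm x" by linarith
          then show ?thesis
          proof cases
            case 1
            then have "A \<le> a * b * e powr (-\<gamma> - 1)" unfolding A_def using gW_le_e[OF e, of x] abp
              by (simp add: indicator_def)
            then have "A powr q \<le> (a * b * e powr (-\<gamma> - 1)) powr q" using An q by (intro powr_mono2) auto
            moreover have "T1 x = (a * b * e powr (-\<gamma> - 1)) powr q" using 1 unfolding T1_def by simp
            ultimately show ?thesis using T2nn[of x] by linarith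
          next
            case 2
            then have x0': "x \<noteq> 0" using e by auto
            have "norm x < e * 2^K" using K' 2 by linarith
            then obtain j where j: "j < K" "x \<in> sh e j" using sh_cover[OF e 2(1)] by blast
            have ej: "0 < e * 2^j" using e by simp
            have "A = norm (gW e x)" unfolding A_def using 2 by (simp add: indicator_def)
            also have "\<dots> \<le> a * b * norm x powr (-\<gamma> - 1)" by (rule gW_le_x[OF e x0'])
            also have "\<dots> \<le> a * b * (e*2^j) powr (-\<gamma> - 1)"
              using j ej gamma_pos abp by (intro mult_left_mono powr_mono2') (auto simp: sh_def ann_def)
            finally have "A powr q \<le> (a * b * (e*2^j) powr (-\<gamma> - 1)) powr q" using An q by (intro powr_mono2) auto
            also have "\<dots> = (a * b) powr q * (e*2^j) powr (-\<kappa>)"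
              by (subst powr_pow_mult) (use ej abp in \<open>simp_all add: kq\<close>)
            also have "\<dots> = T2 x" unfolding T2_def
              using sum_ind_single[OF e j(2) j(1), of "\<lambda>k. (a * b) powr q * (e*2^k) powr (-\<kappa>)"] by simp
            finally show ?thesis using T1nn[of x] by linarith
          next
            case 3
            then have "A = 0" unfolding A_def by (simp add: indicator_def)
            then show ?thesis using T1nn[of x] T2nn[of x] q by simp
          qed
        qed
        also have "B powr q \<le> T3 x"
        proof (cases "x \<in> ann (\<delta> * \<rho> / 2) (\<delta> * \<rho>)")
          case True
          then have xr: "\<delta> * \<rho> / 2 \<le> norm x" "norm x < \<delta> * \<rho>" by (auto simp: ann_def)
          then have x0': "x \<noteq> 0" using dr by auto
          have "W e x \<le> norm x powr (-\<gamma>)" by (rule W_le_x[OF e x0'])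
          also have "\<dots> \<le> (\<delta> * \<rho> / 2) powr (-\<gamma>)" using xr dr gamma_pos by (intro powr_mono2') auto
          finally have "B \<le> M / \<delta> * (\<delta> * \<rho> / 2) powr (-\<gamma>)" unfolding B_def using True M dl
            by (simp add: mult_left_mono divide_right_mono)
          also have "M / \<delta> * (\<delta> * \<rho> / 2) powr (-\<gamma>) = Mc * \<delta> powr (-\<gamma> - 1)"
          proof -
            have "(\<delta> * \<rho> / 2) powr (-\<gamma>) = \<delta> powr (-\<gamma>) * (\<rho> / 2) powr (-\<gamma>)"
              using dl rho by (simp add: powr_mult[symmetric])
            moreover have "\<delta> powr (-\<gamma> - 1) = \<delta> powr (-\<gamma>) / \<delta>" using dl by (simp add: powr_diff)
            ultimately show ?thesis unfolding Mc_def by (simp add: field_simps)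
          qed
          finally have "B powr q \<le> (Mc * \<delta> powr (-\<gamma> - 1)) powr q" using Bn q by (intro powr_mono2) auto
          then show ?thesis unfolding T3_def using xr by (simp add: indicator_def)
        next
          case False
          then have "B = 0" unfolding B_def by simp
          then show ?thesis using T3nn q by simp
        qed
        finally show ?thesis unfolding H_def by (simp add: algebra_simps mult_left_mono)
      qed
      have fnn: "0 \<le> norm (gU e \<delta> x) powr q" for x by simp
      note D = dom_integral[OF Hint gU_powr_meas fnn pt]
      show ?thesis using D Hval by simp
    qed
    obtain K0 where "\<delta> * \<rho> / e < 2^K0" using real_arch_pow[of 2 "\<delta> * \<rho> / e"] by auto
    then have K0: "\<delta> * \<rho> \<le> e * 2^K0" using e by (simp add: field_simps)
    have Int: "integrable lborel (\<lambda>x. norm (gU e \<delta> x) powr q)" using UP[OF K0] by blast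
    have LO: "c0 * e powr (d - \<kappa>) * (\<Sum>k<K. x0^k) \<le> integral\<^sup>L lborel (\<lambda>x. norm (gU e \<delta> x) powr q)"
      if K': "e * 2^K \<le> \<delta> * \<rho> / 2" for K
    proof -
      define L where "L x = (\<Sum>k<K. c1 * (e*2^k) powr (-\<kappa>) * indicator (sh e k) x)" for x :: 'a
      have iL: "integrable lborel L" unfolding L_def[abs_def] by (rule step_int_sh_integrable)
      have vL: "integral\<^sup>L lborel L = c0 * e powr (d - \<kappa>) * (\<Sum>k<K. x0^k)"
        unfolding L_def[abs_def] step_int_sh[OF e] by (simp add: c0_def \<omega>_def d_def x0_def mult_ac)
      have pt: "L x \<le> norm (gU e \<delta> x) powr q" for x
      proof (cases "\<exists>j<K. x \<in> sh e j")
        case True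
        then obtain j where j: "j < K" "x \<in> sh e j" by blast
        have ej: "0 < e * 2^j" using e by simp
        have xj: "e * 2^j \<le> norm x" "norm x < e * 2^(j+1)" using j by (auto simp: sh_def ann_def)
        have "(2::real)^(j+1) \<le> 2^K" using j by (intro power_increasing) auto
        then have "e * 2^(j+1) \<le> e * 2^K" using e by simp
        then have "norm x < \<delta> * \<rho> / 2" using xj K' by linarith
        then have g: "gU e \<delta> x = gW e x" by (rule gU_in[OF dl])
        have "e * 1 \<le> e * 2^j" using e by (intro mult_left_mono) auto
        then have ex: "e \<le> norm x" using xj by linarith
        have "a * b * 2 powr (-b - 1) * 2 powr (-\<gamma> - 1) * (e * 2^j) powr (-\<gamma> - 1)
              = a * b * 2 powr (-b - 1) * (e * 2^(j+1)) powr (-\<gamma> - 1)"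
          using e by (simp add: powr_mult mult_ac)
        also have "\<dots> \<le> a * b * 2 powr (-b - 1) * norm x powr (-\<gamma> - 1)"
          using xj e ex gamma_pos abp by (intro mult_left_mono powr_mono2') auto
        also have "\<dots> \<le> norm (gU e \<delta> x)" unfolding g by (rule gW_ge[OF e ex])
        finally have "(a * b * 2 powr (-b - 1) * 2 powr (-\<gamma> - 1) * (e * 2^j) powr (-\<gamma> - 1)) powr q \<le> norm (gU e \<delta> x) powr q"
          using q abp ej by (intro powr_mono2) auto
        moreover have "(a * b * 2 powr (-b - 1) * 2 powr (-\<gamma> - 1) * (e * 2^j) powr (-\<gamma> - 1)) powr q = c1 * (e*2^j) powr (-\<kappa>)"
          unfolding c1_def by (subst powr_pow_mult) (use ej abp b_pos a_gt1 in \<open>simp_all add: kq\<close>)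
        moreover have "L x = c1 * (e*2^j) powr (-\<kappa>)" unfolding L_def
          using sum_ind_single[OF e j(2) j(1), of "\<lambda>k. c1 * (e*2^k) powr (-\<kappa>)"] by simp
        ultimately show ?thesis by simp
      next
        case False
        then have "L x = 0" unfolding L_def by (intro sum_ind_none) auto
        then show ?thesis by simp
      qed
      have "integral\<^sup>L lborel L \<le> integral\<^sup>L lborel (\<lambda>x. norm (gU e \<delta> x) powr q)"
        by (rule integral_mono[OF iL Int pt])
      then show ?thesis using vL by simp
    qed
    show "integrable lborel (\<lambda>x. norm (gU e \<delta> x) powr q) \<and>
     (\<forall>K. \<delta> * \<rho> \<le> e * 2^K \<longrightarrow> integral\<^sup>L lborel (\<lambda>x. norm (gU e \<delta> x) powr q)
         \<le> C1 * e powr (real DIM('a) - q * (\<gamma> + 1)) * (1 + (\<Sum>k<K. (2 powr (real DIM('a) - q * (\<gamma> + 1)))^k))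
           + C3 * \<delta> powr (real DIM('a) - q * (\<gamma> + 1))) \<and>
     (\<forall>K. e * 2^K \<le> \<delta> * \<rho> / 2 \<longrightarrow>
        c0 * e powr (real DIM('a) - q * (\<gamma> + 1)) * (\<Sum>k<K. (2 powr (real DIM('a) - q * (\<gamma> + 1)))^k)
        \<le> integral\<^sup>L lborel (\<lambda>x. norm (gU e \<delta> x) powr q))"
      using Int UP LO unfolding d_def \<kappa>_def x0_def by blast
  qed
qed

end


lemma ev_ratio: assumes "(\<lambda>j. \<epsilon> j / \<delta> j) \<longlonglongrightarrow> (0::real)" "0 < \<eta>"
  shows "\<forall>\<^sub>F j in sequentially. \<epsilon> j / \<delta> j < \<eta>"
  using order_tendstoD(2)[OF assms] .

context L4 begin

lemma seq_P:
  assumes ep: "\<And>j. 0 < \<epsilon> j" and dp: "\<And>j. 0 < \<delta> j" and rl: "(\<lambda>j. \<epsilon> j / \<delta> j) \<longlonglongrightarrow> 0"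
    and t: "0 < t" "real DIM('a) < \<gamma> * t"
  shows "th (\<lambda>j. integral\<^sup>L lborel (\<lambda>x. u (\<epsilon> j) (\<delta> j) x powr t)) (\<lambda>j. \<epsilon> j powr (real DIM('a) - \<gamma> * t))"
proof -
  obtain c C where cC: "0 < c" "0 < C" and B: "\<And>e \<delta>. 0 < e \<Longrightarrow> 0 < \<delta> \<Longrightarrow> e \<le> \<delta> * \<rho> / 2 \<Longrightarrow>
     integrable lborel (\<lambda>x. u e \<delta> x powr t) \<and>
     c * e powr (real DIM('a) - \<gamma> * t) \<le> integral\<^sup>L lborel (\<lambda>x. u e \<delta> x powr t) \<and>
     integral\<^sup>L lborel (\<lambda>x. u e \<delta> x powr t) \<le> C * e powr (real DIM('a) - \<gamma> * t)"
    using P_est[OF t] by blast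
  show ?thesis
  proof (rule thI[OF cC])
    have "\<forall>\<^sub>F j in sequentially. \<epsilon> j / \<delta> j < \<rho> / 2"
      using ev_ratio[OF rl, of "\<rho> / 2"] rho by simp
    then show "\<forall>\<^sub>F j in sequentially. 0 < \<epsilon> j powr (real DIM('a) - \<gamma> * t) \<and>
        c * \<epsilon> j powr (real DIM('a) - \<gamma> * t) \<le> integral\<^sup>L lborel (\<lambda>x. u (\<epsilon> j) (\<delta> j) x powr t) \<and>
        integral\<^sup>L lborel (\<lambda>x. u (\<epsilon> j) (\<delta> j) x powr t) \<le> C * \<epsilon> j powr (real DIM('a) - \<gamma> * t)"
    proof eventually_elim
      case (elim j)
      then have "\<epsilon> j \<le> \<delta> j * \<rho> / 2" using dp[of j] by (simp add: field_simps)
      then show ?case using B[OF ep dp] ep[of j] by simp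
    qed
  qed
qed

lemma seq_G_gt:
  assumes ep: "\<And>j. 0 < \<epsilon> j" and dp: "\<And>j. 0 < \<delta> j" and rl: "(\<lambda>j. \<epsilon> j / \<delta> j) \<longlonglongrightarrow> 0"
    and q: "0 < q" and kd: "real DIM('a) < q * (\<gamma> + 1)"
  shows "th (\<lambda>j. integral\<^sup>L lborel (\<lambda>x. norm (gU (\<epsilon> j) (\<delta> j) x) powr q)) (\<lambda>j. \<epsilon> j powr (real DIM('a) - q * (\<gamma> + 1)))"
proof -
  define \<theta> where "\<theta> = real DIM('a) - q * (\<gamma> + 1)"
  define x0 where "x0 = (2::real) powr \<theta>"
  have x0: "0 < x0" "x0 < 1" unfolding x0_def \<theta>_def using kd by (auto intro!: powr_less_one)
  obtain C1 C3 c0 where pos: "0 < C1" "0 < C3" "0 < c0" and B: "\<And>e \<delta>. 0 < e \<Longrightarrow> 0 < \<delta> \<Longrightarrow>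
     integrable lborel (\<lambda>x. norm (gU e \<delta> x) powr q) \<and>
     (\<forall>K. \<delta> * \<rho> \<le> e * 2^K \<longrightarrow> integral\<^sup>L lborel (\<lambda>x. norm (gU e \<delta> x) powr q)
         \<le> C1 * e powr \<theta> * (1 + (\<Sum>k<K. x0^k)) + C3 * \<delta> powr \<theta>) \<and>
     (\<forall>K. e * 2^K \<le> \<delta> * \<rho> / 2 \<longrightarrow> c0 * e powr \<theta> * (\<Sum>k<K. x0^k) \<le> integral\<^sup>L lborel (\<lambda>x. norm (gU e \<delta> x) powr q))"
    using G_est[OF q] unfolding \<theta>_def x0_def by blast
  define CC where "CC = C1 * (1 + 1 / (1 - x0)) + C3"
  have CC: "0 < CC" unfolding CC_def using pos x0 by (intro add_pos_pos mult_pos_pos) auto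
  show ?thesis unfolding \<theta>_def[symmetric]
  proof (rule thI[OF pos(3) CC])
    have "\<forall>\<^sub>F j in sequentially. \<epsilon> j / \<delta> j < min (\<rho> / 4) 1" 
      using ev_ratio[OF rl, of "min (\<rho> / 4) 1"] rho by simp
    then show "\<forall>\<^sub>F j in sequentially. 0 < \<epsilon> j powr \<theta> \<and>
        c0 * \<epsilon> j powr \<theta> \<le> integral\<^sup>L lborel (\<lambda>x. norm (gU (\<epsilon> j) (\<delta> j) x) powr q) \<and>
        integral\<^sup>L lborel (\<lambda>x. norm (gU (\<epsilon> j) (\<delta> j) x) powr q) \<le> CC * \<epsilon> j powr \<theta>"
    proof eventually_elim
      case (elim j)
      define e where "e = \<epsilon> j"
      define d where "d = \<delta> j"
      have e: "0 < e" and d: "0 < d" using ep dp unfolding e_def d_def by auto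
      have ed: "e \<le> d * \<rho> / 4" "e \<le> d" using elim d unfolding e_def d_def by (auto simp: field_simps)
      note Be = B[OF e d]
      have tp: "0 < e powr \<theta>" using e by simp
      have "1 \<le> d * \<rho> / e" using ed e rho by (simp add: field_simps)
      then obtain K where K: "d * \<rho> / e \<le> 2^K" "2^K \<le> 2 * (d * \<rho> / e)" using dy_up by blast
      then have "d * \<rho> \<le> e * 2^K" using e by (simp add: field_simps)
      then have "integral\<^sup>L lborel (\<lambda>x. norm (gU e d x) powr q) \<le> C1 * e powr \<theta> * (1 + (\<Sum>k<K. x0^k)) + C3 * d powr \<theta>"
        using Be by blast
      also have "\<dots> \<le> C1 * e powr \<theta> * (1 + 1 / (1 - x0)) + C3 * e powr \<theta>"
      proof (intro add_mono mult_left_mono)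
        show "(\<Sum>k<K. x0^k) \<le> 1 / (1 - x0)" using x0 by (intro geo_neg) auto
        show "d powr \<theta> \<le> e powr \<theta>" using ed e kd unfolding \<theta>_def by (intro powr_mono2') auto
      qed (use pos tp in auto)
      also have "\<dots> = CC * e powr \<theta>" unfolding CC_def by (simp add: algebra_simps)
      finally have up: "integral\<^sup>L lborel (\<lambda>x. norm (gU e d x) powr q) \<le> CC * e powr \<theta>" .
      have "e * 2^1 \<le> d * \<rho> / 2" using ed by simp
      then have "c0 * e powr \<theta> * (\<Sum>k<1. x0^k) \<le> integral\<^sup>L lborel (\<lambda>x. norm (gU e d x) powr q)"
        using Be by blast
      then have lo: "c0 * e powr \<theta> \<le> integral\<^sup>L lborel (\<lambda>x. norm (gU e d x) powr q)" by simp
      show ?case using up lo tp unfolding e_def d_def by simp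
    qed
  qed
qed

lemma seq_G_lt:
  assumes ep: "\<And>j. 0 < \<epsilon> j" and dp: "\<And>j. 0 < \<delta> j" and rl: "(\<lambda>j. \<epsilon> j / \<delta> j) \<longlonglongrightarrow> 0"
    and q: "0 < q" and kd: "q * (\<gamma> + 1) < real DIM('a)"
  shows "th (\<lambda>j. integral\<^sup>L lborel (\<lambda>x. norm (gU (\<epsilon> j) (\<delta> j) x) powr q)) (\<lambda>j. \<delta> j powr (real DIM('a) - q * (\<gamma> + 1)))"
proof -
  define \<theta> where "\<theta> = real DIM('a) - q * (\<gamma> + 1)"
  define x0 where "x0 = (2::real) powr \<theta>"
  have th0: "0 < \<theta>" unfolding \<theta>_def using kd by simp
  have x0: "1 < x0" unfolding x0_def using th0 by simp
  obtain C1 C3 c0 where pos: "0 < C1" "0 < C3" "0 < c0" and B: "\<And>e \<delta>. 0 < e \<Longrightarrow> 0 < \<delta> \<Longrightarrow>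
     integrable lborel (\<lambda>x. norm (gU e \<delta> x) powr q) \<and>
     (\<forall>K. \<delta> * \<rho> \<le> e * 2^K \<longrightarrow> integral\<^sup>L lborel (\<lambda>x. norm (gU e \<delta> x) powr q)
         \<le> C1 * e powr \<theta> * (1 + (\<Sum>k<K. x0^k)) + C3 * \<delta> powr \<theta>) \<and>
     (\<forall>K. e * 2^K \<le> \<delta> * \<rho> / 2 \<longrightarrow> c0 * e powr \<theta> * (\<Sum>k<K. x0^k) \<le> integral\<^sup>L lborel (\<lambda>x. norm (gU e \<delta> x) powr q))"
    using G_est[OF q] unfolding \<theta>_def x0_def by blast
  define CC where "CC = C1 * (1 + (2 * \<rho>) powr \<theta> / (x0 - 1)) + C3"
  define cc where "cc = c0 * (\<rho> / 8) powr \<theta>"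
  have CC: "0 < CC" unfolding CC_def using pos x0 rho by (intro add_pos_pos mult_pos_pos) auto
  have cc: "0 < cc" unfolding cc_def using pos rho by simp
  show ?thesis unfolding \<theta>_def[symmetric]
  proof (rule thI[OF cc CC])
    have "\<forall>\<^sub>F j in sequentially. \<epsilon> j / \<delta> j < min (\<rho> / 4) 1" 
      using ev_ratio[OF rl, of "min (\<rho> / 4) 1"] rho by simp
    then show "\<forall>\<^sub>F j in sequentially. 0 < \<delta> j powr \<theta> \<and>
        cc * \<delta> j powr \<theta> \<le> integral\<^sup>L lborel (\<lambda>x. norm (gU (\<epsilon> j) (\<delta> j) x) powr q) \<and>
        integral\<^sup>L lborel (\<lambda>x. norm (gU (\<epsilon> j) (\<delta> j) x) powr q) \<le> CC * \<delta> j powr \<theta>"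
    proof eventually_elim
      case (elim j)
      define e where "e = \<epsilon> j"
      define d where "d = \<delta> j"
      have e: "0 < e" and d: "0 < d" using ep dp unfolding e_def d_def by auto
      have ed: "e \<le> d * \<rho> / 4" "e \<le> d" using elim d unfolding e_def d_def by (auto simp: field_simps)
      note Be = B[OF e d]
      have tp: "0 < e powr \<theta>" "0 < d powr \<theta>" using e d by auto
      have "1 \<le> d * \<rho> / e" using ed e rho by (simp add: field_simps)
      then obtain K where K: "d * \<rho> / e \<le> 2^K" "2^K \<le> 2 * (d * \<rho> / e)" using dy_up by blast
      then have "d * \<rho> \<le> e * 2^K" using e by (simp add: field_simps)
      then have "integral\<^sup>L lborel (\<lambda>x. norm (gU e d x) powr q) \<le> C1 * e powr \<theta> * (1 + (\<Sum>k<K. x0^k)) + C3 * d powr \<theta>"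
        using Be by blast
      also have "e powr \<theta> * (1 + (\<Sum>k<K. x0^k)) \<le> d powr \<theta> * (1 + (2 * \<rho>) powr \<theta> / (x0 - 1))"
      proof -
        have "(\<Sum>k<K. x0^k) \<le> x0^K / (x0 - 1)" by (rule geo_pos_up[OF x0])
        also have "x0^K = ((2::real)^K) powr \<theta>" unfolding x0_def by (simp add: pw2)
        also have "\<dots> \<le> (2 * (d * \<rho> / e)) powr \<theta>" using K th0 by (intro powr_mono2) auto
        finally have "(\<Sum>k<K. x0^k) \<le> (2 * (d * \<rho> / e)) powr \<theta> / (x0 - 1)" using x0 by (simp add: divide_right_mono)
        then have "e powr \<theta> * (1 + (\<Sum>k<K. x0^k)) \<le> e powr \<theta> * (1 + (2 * (d * \<rho> / e)) powr \<theta> / (x0 - 1))"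
          using tp by (intro mult_left_mono) auto
        also have "e powr \<theta> * (2 * (d * \<rho> / e)) powr \<theta> = (2 * \<rho>) powr \<theta> * d powr \<theta>"
        proof -
          have "e * (2 * (d * \<rho> / e)) = (2 * \<rho>) * d" using e by (simp add: field_simps)
          then have "(e * (2 * (d * \<rho> / e))) powr \<theta> = ((2 * \<rho>) * d) powr \<theta>" by simp
          moreover have "(e * (2 * (d * \<rho> / e))) powr \<theta> = e powr \<theta> * (2 * (d * \<rho> / e)) powr \<theta>"
            by (rule powr_mult)
          moreover have "((2 * \<rho>) * d) powr \<theta> = (2 * \<rho>) powr \<theta> * d powr \<theta>"
            by (rule powr_mult)
          ultimately show ?thesis by simp
        qed
        then have "e powr \<theta> * (1 + (2 * (d * \<rho> / e)) powr \<theta> / (x0 - 1)) = e powr \<theta> + (2 * \<rho>) powr \<theta> * d powr \<theta> / (x0 - 1)"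
          by (simp add: algebra_simps)
        also have "\<dots> \<le> d powr \<theta> + (2 * \<rho>) powr \<theta> * d powr \<theta> / (x0 - 1)"
          using ed e th0 by (simp add: powr_mono2)
        also have "\<dots> = d powr \<theta> * (1 + (2 * \<rho>) powr \<theta> / (x0 - 1))" by (simp add: algebra_simps)
        finally show ?thesis .
      qed
      then have "C1 * e powr \<theta> * (1 + (\<Sum>k<K. x0^k)) + C3 * d powr \<theta> \<le> C1 * (d powr \<theta> * (1 + (2 * \<rho>) powr \<theta> / (x0 - 1))) + C3 * d powr \<theta>"
        using pos by (simp add: mult.assoc mult_left_mono)
      also have "\<dots> = CC * d powr \<theta>" unfolding CC_def by (simp add: algebra_simps)
      finally have up: "integral\<^sup>L lborel (\<lambda>x. norm (gU e d x) powr q) \<le> CC * d powr \<theta>" .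
      have "2 \<le> d * \<rho> / (2 * e)" using ed e by (simp add: field_simps)
      then obtain K where K: "1 \<le> K" "2^K \<le> d * \<rho> / (2 * e)" "d * \<rho> / (2 * e) < 2^(K+1)" using dy_lo by blast
      then have "e * 2^K \<le> d * \<rho> / 2" using e by (simp add: field_simps)
      then have "c0 * e powr \<theta> * (\<Sum>k<K. x0^k) \<le> integral\<^sup>L lborel (\<lambda>x. norm (gU e d x) powr q)"
        using Be by blast
      moreover have "cc * d powr \<theta> \<le> c0 * e powr \<theta> * (\<Sum>k<K. x0^k)"
      proof -
        have "x0^(K-1) = ((2::real)^(K-1)) powr \<theta>" unfolding x0_def by (simp add: pw2)
        moreover have "d * \<rho> / (8 * e) \<le> 2^(K-1)"
        proof -
          have "(2::real)^(K+1) = 4 * 2^(K-1)" using K(1) by (cases K) auto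
          then show ?thesis using K(3) e by (simp add: field_simps)
        qed
        ultimately have "(d * \<rho> / (8 * e)) powr \<theta> \<le> x0^(K-1)" using th0 e d rho by (simp add: powr_mono2)
        also have "\<dots> \<le> (\<Sum>k<K. x0^k)" using K x0 by (intro geo_pos_lo) auto
        finally have S: "(d * \<rho> / (8 * e)) powr \<theta> \<le> (\<Sum>k<K. x0^k)" .
        have "e powr \<theta> * (d * \<rho> / (8 * e)) powr \<theta> = (\<rho> / 8) powr \<theta> * d powr \<theta>"
        proof -
          have "e * (d * \<rho> / (8 * e)) = (\<rho> / 8) * d" using e by (simp add: field_simps)
          then have "(e * (d * \<rho> / (8 * e))) powr \<theta> = ((\<rho> / 8) * d) powr \<theta>" by (rule arg_cong[where f="\<lambda>z. z powr \<theta>"])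
          moreover have "(e * (d * \<rho> / (8 * e))) powr \<theta> = e powr \<theta> * (d * \<rho> / (8 * e)) powr \<theta>"
            by (rule powr_mult)
          moreover have "((\<rho> / 8) * d) powr \<theta> = (\<rho> / 8) powr \<theta> * d powr \<theta>"
            by (rule powr_mult)
          ultimately show ?thesis by simp
        qed
        then have "cc * d powr \<theta> = c0 * (e powr \<theta> * (d * \<rho> / (8 * e)) powr \<theta>)" unfolding cc_def by simp
        also have "\<dots> \<le> c0 * (e powr \<theta> * (\<Sum>k<K. x0^k))" using S tp pos by (intro mult_left_mono) auto
        finally show ?thesis by (simp add: mult.assoc)
      qed
      ultimately have lo: "cc * d powr \<theta> \<le> integral\<^sup>L lborel (\<lambda>x. norm (gU e d x) powr q)" by linarith
      show ?case using up lo tp unfolding e_def d_def by simp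
    qed
  qed
qed


lemma seq_G_eq:
  assumes ep: "\<And>j. 0 < \<epsilon> j" and dp: "\<And>j. 0 < \<delta> j" and rl: "(\<lambda>j. \<epsilon> j / \<delta> j) \<longlonglongrightarrow> 0"
    and q: "0 < q" and kd: "q * (\<gamma> + 1) = real DIM('a)"
  shows "th (\<lambda>j. integral\<^sup>L lborel (\<lambda>x. norm (gU (\<epsilon> j) (\<delta> j) x) powr q)) (\<lambda>j. ln (\<delta> j / \<epsilon> j))"
proof -
  obtain C1 C3 c0 where pos: "0 < C1" "0 < C3" "0 < c0" and B0: "\<And>e \<delta>. 0 < e \<Longrightarrow> 0 < \<delta> \<Longrightarrow>
     integrable lborel (\<lambda>x. norm (gU e \<delta> x) powr q) \<and>
     (\<forall>K. \<delta> * \<rho> \<le> e * 2^K \<longrightarrow> integral\<^sup>L lborel (\<lambda>x. norm (gU e \<delta> x) powr q)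
         \<le> C1 * e powr (real DIM('a) - q * (\<gamma> + 1)) * (1 + (\<Sum>k<K. (2 powr (real DIM('a) - q * (\<gamma> + 1)))^k))
           + C3 * \<delta> powr (real DIM('a) - q * (\<gamma> + 1))) \<and>
     (\<forall>K. e * 2^K \<le> \<delta> * \<rho> / 2 \<longrightarrow>
        c0 * e powr (real DIM('a) - q * (\<gamma> + 1)) * (\<Sum>k<K. (2 powr (real DIM('a) - q * (\<gamma> + 1)))^k)
        \<le> integral\<^sup>L lborel (\<lambda>x. norm (gU e \<delta> x) powr q))"
    using G_est[OF q] by blast
  have Bu: "integral\<^sup>L lborel (\<lambda>x. norm (gU e \<delta> x) powr q) \<le> C1 * (1 + real K) + C3"
    if "0 < e" "0 < \<delta>" "\<delta> * \<rho> \<le> e * 2^K" for e \<delta> K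
  proof -
    have "integral\<^sup>L lborel (\<lambda>x. norm (gU e \<delta> x) powr q)
         \<le> C1 * e powr (real DIM('a) - q * (\<gamma> + 1)) * (1 + (\<Sum>k<K. (2 powr (real DIM('a) - q * (\<gamma> + 1)))^k))
           + C3 * \<delta> powr (real DIM('a) - q * (\<gamma> + 1))" using B0[OF that(1,2)] that(3) by blast
    then show ?thesis using that unfolding kd by simp
  qed
  have Bl: "c0 * real K \<le> integral\<^sup>L lborel (\<lambda>x. norm (gU e \<delta> x) powr q)"
    if "0 < e" "0 < \<delta>" "e * 2^K \<le> \<delta> * \<rho> / 2" for e \<delta> K
  proof -
    have "c0 * e powr (real DIM('a) - q * (\<gamma> + 1)) * (\<Sum>k<K. (2 powr (real DIM('a) - q * (\<gamma> + 1)))^k)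
        \<le> integral\<^sup>L lborel (\<lambda>x. norm (gU e \<delta> x) powr q)" using B0[OF that(1,2)] that(3) by blast
    then show ?thesis using that unfolding kd by simp
  qed
  define l2 where "l2 = ln (2::real)"
  have l2: "0 < l2" unfolding l2_def by simp
  define T where "T = 1 + 2 * \<bar>l2 - ln (\<rho> / 2)\<bar> + \<bar>ln (2 * \<rho>)\<bar>"
  define CC where "CC = C1 + 2 * C1 / l2 + C3"
  define cc where "cc = c0 / (2 * l2)"
  have CC: "0 < CC" unfolding CC_def using pos l2 by (intro add_pos_pos) auto
  have cc: "0 < cc" unfolding cc_def using pos l2 by simp
  show ?thesis
  proof (rule thI[OF cc CC])
    have "\<forall>\<^sub>F j in sequentially. \<epsilon> j / \<delta> j < min (min (\<rho> / 4) 1) (exp (- T))"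
      using ev_ratio[OF rl, of "min (min (\<rho> / 4) 1) (exp (- T))"] rho by simp
    then show "\<forall>\<^sub>F j in sequentially. 0 < ln (\<delta> j / \<epsilon> j) \<and>
        cc * ln (\<delta> j / \<epsilon> j) \<le> integral\<^sup>L lborel (\<lambda>x. norm (gU (\<epsilon> j) (\<delta> j) x) powr q) \<and>
        integral\<^sup>L lborel (\<lambda>x. norm (gU (\<epsilon> j) (\<delta> j) x) powr q) \<le> CC * ln (\<delta> j / \<epsilon> j)"
    proof eventually_elim
      case (elim j)
      define e where "e = \<epsilon> j"
      define d where "d = \<delta> j"
      have e: "0 < e" and d: "0 < d" using ep dp unfolding e_def d_def by auto
      have ed: "e \<le> d * \<rho> / 4" "e / d < exp (- T)" using elim d unfolding e_def d_def by (auto simp: field_simps)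
      define y where "y = ln (d / e)"
      have "exp T < d / e"
      proof -
        have "1 / exp (- T) < 1 / (e / d)" using ed(2) e d by (intro divide_strict_left_mono) auto
        then show ?thesis using e d by (simp add: exp_minus field_simps)
      qed
      then have yT: "T < y" unfolding y_def using e d by (metis exp_less_cancel_iff exp_ln divide_pos_pos)
      have T1: "1 \<le> T" "2 * \<bar>l2 - ln (\<rho> / 2)\<bar> \<le> T" "\<bar>ln (2 * \<rho>)\<bar> \<le> T" unfolding T_def by auto
      have "1 \<le> d * \<rho> / e" using ed e rho by (simp add: field_simps)
      then obtain K where K: "d * \<rho> / e \<le> 2^K" "2^K \<le> 2 * (d * \<rho> / e)" using dy_up by blast
      then have "d * \<rho> \<le> e * 2^K" using e by (simp add: field_simps)
      then have "integral\<^sup>L lborel (\<lambda>x. norm (gU e d x) powr q) \<le> C1 * (1 + real K) + C3"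
        by (rule Bu[OF e d])
      also have "real K * l2 \<le> ln (2 * \<rho>) + y"
      proof -
        have "ln ((2::real)^K) \<le> ln (2 * (d * \<rho> / e))" using K e d rho by (subst ln_le_cancel_iff) auto
        moreover have "ln ((2::real)^K) = real K * l2" unfolding l2_def by (rule ln_realpow)
        moreover have "ln (2 * (d * \<rho> / e)) = ln (2 * \<rho>) + y"
        proof -
          have eq: "2 * (d * \<rho> / e) = (2 * \<rho>) * (d / e)" by simp
          show ?thesis unfolding y_def by (subst eq, rule ln_mult_pos) (use e d rho in simp_all)
        qed
        ultimately show ?thesis by simp
      qed
      then have "real K \<le> 2 * y / l2" using T1 yT l2 by (simp add: field_simps)
      then have "C1 * (1 + real K) + C3 \<le> C1 * (y + 2 * y / l2) + C3 * y"
        using pos T1 yT by (intro add_mono mult_left_mono) auto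
      also have "\<dots> = CC * y" unfolding CC_def by (simp add: algebra_simps)
      finally have up: "integral\<^sup>L lborel (\<lambda>x. norm (gU e d x) powr q) \<le> CC * y" .
      have "2 \<le> d * \<rho> / (2 * e)" using ed e by (simp add: field_simps)
      then obtain K where K: "1 \<le> K" "2^K \<le> d * \<rho> / (2 * e)" "d * \<rho> / (2 * e) < 2^(K+1)" using dy_lo by blast
      then have "e * 2^K \<le> d * \<rho> / 2" using e by (simp add: field_simps)
      then have lo0: "c0 * real K \<le> integral\<^sup>L lborel (\<lambda>x. norm (gU e d x) powr q)"
        by (rule Bl[OF e d])
      have "ln (\<rho> / 2) + y < real (K + 1) * l2"
      proof -
        have "ln (d * \<rho> / (2 * e)) < ln ((2::real)^(K+1))" using K e d rho by (subst ln_less_cancel_iff) auto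
        moreover have "ln ((2::real)^(K+1)) = real (K+1) * l2" unfolding l2_def by (rule ln_realpow)
        moreover have "ln (d * \<rho> / (2 * e)) = ln (\<rho> / 2) + y"
        proof -
          have eq: "d * \<rho> / (2 * e) = (\<rho> / 2) * (d / e)" by simp
          show ?thesis unfolding y_def by (subst eq, rule ln_mult_pos) (use e d rho in simp_all)
        qed
        ultimately show ?thesis by simp
      qed
      then have h1: "ln (\<rho> / 2) + y < l2 + l2 * real K" by (simp add: algebra_simps)
      have a1: "l2 - ln (\<rho> / 2) \<le> \<bar>l2 - ln (\<rho> / 2)\<bar>" by (rule abs_ge_self)
      have gen: "\<And>m A::real. ln (\<rho> / 2) + y < l2 + m \<Longrightarrow> l2 - ln (\<rho> / 2) \<le> A \<Longrightarrow> 2 * A \<le> T \<Longrightarrow> y \<le> 2 * m"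
        using yT by linarith
      have "y \<le> 2 * (l2 * real K)" by (rule gen[OF h1 a1 T1(2)])
      then have "y / (2 * l2) \<le> real K" using l2 by (simp add: divide_le_eq mult_ac)
      then have "cc * y \<le> c0 * real K" unfolding cc_def using pos l2 by (simp add: field_simps)
      then have lo: "cc * y \<le> integral\<^sup>L lborel (\<lambda>x. norm (gU e d x) powr q)" using lo0 by linarith
      have "0 < y" using yT T1 by linarith
      then show ?case using up lo unfolding e_def d_def y_def by simp
    qed
  qed
qed

end


context L4 begin

lemma Lnorm_u: "0 < e \<Longrightarrow> Lnorm r (u e \<delta>) = (integral\<^sup>L lborel (\<lambda>x. u e \<delta> x powr r)) powr (1/r)"
  unfolding Lnorm_def using u_nonneg by simp

lemma v_fun_eq: "v_fun (real DIM('a)) p \<psi> e \<delta> = (\<lambda>x. u e \<delta> x / Lnorm (real DIM('a) * p / (real DIM('a) - p)) (u e \<delta>))"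
  unfolding v_fun_def[abs_def] u_fun_eq by simp

lemma conv_grad: assumes "0 < e" "0 < \<delta>" "0 < L"
  shows "integral\<^sup>L lborel (\<lambda>x. norm (grad (\<lambda>x. u e \<delta> x / L) x) powr q)
       = integral\<^sup>L lborel (\<lambda>x. norm (gU e \<delta> x) powr q) / L powr q"
proof -
  have "norm (grad (\<lambda>x. u e \<delta> x / L) x) powr q = norm (gU e \<delta> x) powr q / L powr q" for x
    unfolding grad_v[OF assms(1,2)] using assms(3) by (simp add: powr_divide)
  then show ?thesis by simp
qed

lemma conv_v: assumes "0 < L"
  shows "integral\<^sup>L lborel (\<lambda>x. (u e \<delta> x / L) powr s) = integral\<^sup>L lborel (\<lambda>x. u e \<delta> x powr s) / L powr s"
  by (simp add: powr_divide)

end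

lemma th_cong_right: "th A B \<Longrightarrow> \<forall>\<^sub>F j in sequentially. B j = B' j \<Longrightarrow> th A B'"
  by (rule th_cong) auto

lemma th_pos: "th A B \<Longrightarrow> \<forall>\<^sub>F j in sequentially. 0 < A j"
  unfolding th_def
proof (elim exE conjE)
  fix c C assume c: "0 < c" and ev: "\<forall>\<^sub>F j in sequentially. 0 < B j \<and> c * B j \<le> A j \<and> A j \<le> C * B j"
  show "\<forall>\<^sub>F j in sequentially. 0 < A j" using ev
  proof eventually_elim
    case (elim j)
    then have "0 < c * B j" using c by simp
    then show ?case using elim by linarith
  qed
qed

lemma pa1: "0 < (e::real) \<Longrightarrow> (e powr a / (e powr b) powr q) / (e powr c / (e powr b) powr s) = e powr ((a - b * q) - (c - b * s))"
  by (simp add: powr_def exp_diff[symmetric] algebra_simps)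

lemma pa2: assumes "0 < (e::real)" shows "(Z / (e powr b) powr q) / (e powr c / (e powr b) powr s) = e powr (-(b * q) - (c - b * s)) * Z"
proof -
  have "(Z / (e powr b) powr q) / (e powr c / (e powr b) powr s) = ((e powr 0 / (e powr b) powr q) / (e powr c / (e powr b) powr s)) * Z"
    using assms by simp
  also have "\<dots> = e powr ((0 - b * q) - (c - b * s)) * Z" by (simp only: pa1[OF assms])
  finally show ?thesis by simp
qed

lemma pa3: "0 < (e::real) \<Longrightarrow> 0 < d \<Longrightarrow> (e / d) powr g / (e powr c / (e powr b) powr s) = e powr (g - (c - b * s)) * d powr (-g)"
  by (simp add: powr_def exp_diff[symmetric] exp_add[symmetric] ln_div algebra_simps)

lemma exps:
  fixes N p q s :: real assumes p: "1 < p" "p < N"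
  shows "(N - (N - p) / (p - 1) * (N * p / (N - p))) * (1 / (N * p / (N - p))) = -(N - p) / (p * (p - 1))"
    "(N - q * ((N - p) / (p - 1) + 1) - (-(N - p) / (p * (p - 1))) * q) - ((N - (N - p) / (p - 1) * s) - (-(N - p) / (p * (p - 1))) * s) = ((N - p) * s - N * q) / p"
    "-((-(N - p) / (p * (p - 1))) * q) - ((N - (N - p) / (p - 1) * s) - (-(N - p) / (p * (p - 1))) * s) = ((N - p) * (s + q / (p - 1)) - N * p) / p"
    "N - q * ((N - p) / (p - 1) + 1) = (N * (p - 1) - (N - 1) * q) / (p - 1)"
    "(N - p) / (p - 1) - ((N - (N - p) / (p - 1) * s) - (-(N - p) / (p * (p - 1))) * s) = ((N - p) * (p - 1) * s - (N * p - 2 * N + p) * p) / (p * (p - 1))"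
    "- (N - p) / (p - 1) = - ((N - p) / (p - 1))"
proof -
  obtain r where r: "r = p - 1" by blast
  obtain D where D: "D = N - p" by blast
  have nz: "p \<noteq> 0" "r \<noteq> 0" "D \<noteq> 0" "N \<noteq> 0" using p r D by auto
  have g1: "D / r * (N * p / D) = N * p / r" using nz by (simp add: field_simps)
  have g2: "N - N * p / r = (N * r - N * p) / r" using nz by (simp add: field_simps)
  have g3: "N * r - N * p = - N" unfolding r by (simp add: algebra_simps)
  show "(N - (N - p) / (p - 1) * (N * p / (N - p))) * (1 / (N * p / (N - p))) = -(N - p) / (p * (p - 1))"
    unfolding r[symmetric] D[symmetric] g1 g2 g3 using nz by (simp add: field_simps)
  show "(N - q * ((N - p) / (p - 1) + 1) - (-(N - p) / (p * (p - 1))) * q) - ((N - (N - p) / (p - 1) * s) - (-(N - p) / (p * (p - 1))) * s) = ((N - p) * s - N * q) / p"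
    unfolding r[symmetric] D[symmetric] using nz by (simp add: field_simps) (simp add: r D algebra_simps)
  show "-((-(N - p) / (p * (p - 1))) * q) - ((N - (N - p) / (p - 1) * s) - (-(N - p) / (p * (p - 1))) * s) = ((N - p) * (s + q / (p - 1)) - N * p) / p"
    unfolding r[symmetric] D[symmetric] using nz by (simp add: field_simps) (simp add: r D algebra_simps)
  show "N - q * ((N - p) / (p - 1) + 1) = (N * (p - 1) - (N - 1) * q) / (p - 1)"
    unfolding r[symmetric] D[symmetric] using nz by (simp add: field_simps) (simp add: r D algebra_simps)
  show "(N - p) / (p - 1) - ((N - (N - p) / (p - 1) * s) - (-(N - p) / (p * (p - 1))) * s) = ((N - p) * (p - 1) * s - (N * p - 2 * N + p) * p) / (p * (p - 1))"
    unfolding r[symmetric] D[symmetric] using nz by (simp add: field_simps) (simp add: r D algebra_simps)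
  show "- (N - p) / (p - 1) = - ((N - p) / (p - 1))" by (rule minus_divide_left[symmetric])
qed

lemma exps_case:
  fixes N p q :: real assumes p: "1 < p" "p < N"
  shows "N < q * ((N - p) / (p - 1) + 1) \<longleftrightarrow> N * (p - 1) / (N - 1) < q"
    "q * ((N - p) / (p - 1) + 1) = N \<longleftrightarrow> q = N * (p - 1) / (N - 1)"
    "q * ((N - p) / (p - 1) + 1) < N \<longleftrightarrow> q < N * (p - 1) / (N - 1)"
proof -
  have e: "(N - p) / (p - 1) + 1 = (N - 1) / (p - 1)" using p by (simp add: field_simps)
  have n1: "0 < N - 1" "0 < p - 1" using p by auto
  show "N < q * ((N - p) / (p - 1) + 1) \<longleftrightarrow> N * (p - 1) / (N - 1) < q"
    unfolding e using n1 by (simp add: field_simps)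
  show "q * ((N - p) / (p - 1) + 1) = N \<longleftrightarrow> q = N * (p - 1) / (N - 1)"
    unfolding e using n1 by (auto simp: field_simps)
  show "q * ((N - p) / (p - 1) + 1) < N \<longleftrightarrow> q < N * (p - 1) / (N - 1)"
    unfolding e using n1 by (simp add: field_simps)
qed

theorem lemma4p1:
  fixes \<psi> :: "real ^ 'n \<Rightarrow> real" and \<rho> p q s :: real
    and \<epsilon> \<delta> :: "nat \<Rightarrow> real"
  defines "N \<equiv> real CARD('n)"
  assumes N2: "CARD('n) \<ge> 2"
    and rho: "\<rho> > 0"
    and psi_smooth: "smooth_fun \<psi>"
    and psi_supp: "closure {x. \<psi> x \<noteq> 0} \<subseteq> ball 0 \<rho>"
    and psi_range: "\<And>x. 0 \<le> \<psi> x \<and> \<psi> x \<le> 1"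
    and psi_one: "\<And>x. x \<in> ball 0 (\<rho>/2) \<Longrightarrow> \<psi> x = 1"
    and pq: "1 < q" "q < p" "p < N"
    and s: "N*(p-1)/(N-p) < s" "s < N*p/(N-p)"
    and eps_pos: "\<And>j. \<epsilon> j > 0"
    and eps_lim: "\<epsilon> \<longlonglongrightarrow> 0"
    and delta: "\<And>j. 0 < \<delta> j \<and> \<delta> j \<le> 1"
    and ratio_lim: "(\<lambda>j. \<epsilon> j / \<delta> j) \<longlonglongrightarrow> 0"
  shows
    "(let R = (\<lambda>j. integral\<^sup>L lborel (\<lambda>x. norm (grad (v_fun N p \<psi> (\<epsilon> j) (\<delta> j)) x) powr q)
                   / integral\<^sup>L lborel (\<lambda>x. v_fun N p \<psi> (\<epsilon> j) (\<delta> j) x powr s))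
      in (q > N*(p-1)/(N-1) \<longrightarrow>
            Theta_seq R (\<lambda>j. \<epsilon> j powr (((N-p)* s - N*q)/p)))
       \<and> (q = N*(p-1)/(N-1) \<longrightarrow>
            Theta_seq R (\<lambda>j. \<epsilon> j powr (((N-p)* s - N*q)/p) * \<bar>ln (\<epsilon> j / \<delta> j)\<bar>))
       \<and> (q < N*(p-1)/(N-1) \<longrightarrow>
            Theta_seq R (\<lambda>j. \<epsilon> j powr (((N-p)*(s + q/(p-1)) - N*p)/p)
                              * \<delta> j powr ((N*(p-1) - (N-1)*q)/(p-1)))))
     \<and> Theta_seq
         (\<lambda>j. (\<epsilon> j / \<delta> j) powr ((N-p)/(p-1))
               / integral\<^sup>L lborel (\<lambda>x. v_fun N p \<psi> (\<epsilon> j) (\<delta> j) x powr s))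
         (\<lambda>j. \<epsilon> j powr (((N-p)*(p-1)* s - (N*p - 2*N + p)*p)/(p*(p-1)))
               * \<delta> j powr (-(N-p)/(p-1)))"
proof -
  have Ndim: "N = real DIM(real ^ 'n)" unfolding N_def by simp
  have sm: "dpart ds \<psi> differentiable_on UNIV" if "set ds \<subseteq> Basis" for ds
    using psi_smooth that unfolding smooth_fun_def by blast
  interpret L: L4 \<psi> \<rho> p
  proof
    show "0 < \<rho>" by (rule rho)
    show "\<psi> differentiable (at x)" for x
      using sm[of "[]"] by (simp add: differentiable_on_def)
    show "continuous_on UNIV (\<lambda>x. frechet_derivative \<psi> (at x) i)" if "i \<in> Basis" for i
      using sm[of "[i]"] that by (simp add: differentiable_imp_continuous_on)
    show "closure {x. \<psi> x \<noteq> 0} \<subseteq> ball 0 \<rho>" by (rule psi_supp)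
    show "0 \<le> \<psi> x \<and> \<psi> x \<le> 1" for x by (rule psi_range)
    show "\<psi> x = 1" if "x \<in> ball 0 (\<rho>/2)" for x using psi_one that by blast
    show "1 < p" by (rule pq(1)[THEN less_trans[OF _ pq(2)]])
    show "p < real DIM(real ^ 'n)" using pq(3) Ndim by simp
  qed
  have p1: "1 < p" using pq by linarith
  have q0: "0 < q" using pq by linarith
  have Np: "p < N" using pq by simp
  have dp: "\<And>j. 0 < \<delta> j" using delta by blast
  have gdef: "L.\<gamma> = (N - p) / (p - 1)" unfolding L.\<gamma>_def Ndim by simp
  define ps where "ps = N * p / (N - p)"
  define AL where "AL = -(N - p) / (p * (p - 1))"
  have s0: "0 < s"
  proof -
    have "0 < N * (p - 1) / (N - p)" using p1 Np by (intro divide_pos_pos mult_pos_pos) auto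
    then show ?thesis using s by linarith
  qed
  have gs: "N < L.\<gamma> * s"
  proof -
    have gen: "\<And>D r. D \<noteq> 0 \<Longrightarrow> r \<noteq> 0 \<Longrightarrow> D / r * (N * r / D) = N" by (simp add: field_simps)
    have "N = (N - p) / (p - 1) * (N * (p - 1) / (N - p))" using gen[of "N - p" "p - 1"] p1 Np by simp
    also have "\<dots> < (N - p) / (p - 1) * s" using s(1) p1 Np by (intro mult_strict_left_mono) auto
    finally show ?thesis unfolding gdef .
  qed
  have ps0: "0 < ps" unfolding ps_def using p1 Np by simp
  have gps: "N < L.\<gamma> * ps"
  proof -
    have gen: "\<And>D r. D \<noteq> 0 \<Longrightarrow> r \<noteq> 0 \<Longrightarrow> D / r * (N * p / D) = N * p / r" by (simp add: field_simps)
    have e: "L.\<gamma> * ps = N * p / (p - 1)" unfolding gdef ps_def using gen[of "N - p" "p - 1"] p1 Np by simp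
    have "N * (p - 1) < N * p" using Np p1 by simp
    then have "N < N * p / (p - 1)" using p1 by (simp add: field_simps)
    then show ?thesis unfolding e .
  qed
  define P where "P t j = integral\<^sup>L lborel (\<lambda>x. L.u (\<epsilon> j) (\<delta> j) x powr t)" for t j
  define G where "G j = integral\<^sup>L lborel (\<lambda>x. norm (L.gU (\<epsilon> j) (\<delta> j) x) powr q)" for j
  define Lj where "Lj j = P ps j powr (1 / ps)" for j
  have thPs: "th (P s) (\<lambda>j. \<epsilon> j powr (N - L.\<gamma> * s))"
    using L.seq_P[OF eps_pos dp ratio_lim s0] gs unfolding P_def[abs_def] Ndim by simp
  have thPps: "th (P ps) (\<lambda>j. \<epsilon> j powr (N - L.\<gamma> * ps))"
    using L.seq_P[OF eps_pos dp ratio_lim ps0] gps unfolding P_def[abs_def] Ndim by simp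
  have thL: "th Lj (\<lambda>j. \<epsilon> j powr AL)"
  proof -
    have "th (\<lambda>j. P ps j powr (1 / ps)) (\<lambda>j. (\<epsilon> j powr (N - L.\<gamma> * ps)) powr (1 / ps))"
      by (rule th_powr[OF thPps])
    moreover have "(\<epsilon> j powr (N - L.\<gamma> * ps)) powr (1 / ps) = \<epsilon> j powr AL" for j
      using exps(1)[OF p1 Np] unfolding gdef ps_def AL_def by (simp add: powr_powr)
    ultimately show ?thesis unfolding Lj_def by simp
  qed
  have Lpos: "\<forall>\<^sub>F j in sequentially. 0 < Lj j" by (rule th_pos[OF thL])
  have vf: "v_fun N p \<psi> (\<epsilon> j) (\<delta> j) = (\<lambda>x. L.u (\<epsilon> j) (\<delta> j) x / Lj j)" for j
    unfolding Lj_def P_def ps_def Ndim L.v_fun_eq L.Lnorm_u[OF eps_pos] by simp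
  have gradeq: "integral\<^sup>L lborel (\<lambda>x. norm (grad (v_fun N p \<psi> (\<epsilon> j) (\<delta> j)) x) powr q) = G j / Lj j powr q"
    if "0 < Lj j" for j
    unfolding vf G_def by (rule L.conv_grad[OF eps_pos dp that])
  have veq: "integral\<^sup>L lborel (\<lambda>x. v_fun N p \<psi> (\<epsilon> j) (\<delta> j) x powr s) = P s j / Lj j powr s"
    if "0 < Lj j" for j
    unfolding vf P_def by (rule L.conv_v[OF that])
  have Den: "th (\<lambda>j. P s j / Lj j powr s) (\<lambda>j. \<epsilon> j powr (N - L.\<gamma> * s) / (\<epsilon> j powr AL) powr s)"
    by (rule th_div[OF thPs th_powr[OF thL]])
  have Lq: "th (\<lambda>j. Lj j powr q) (\<lambda>j. (\<epsilon> j powr AL) powr q)" by (rule th_powr[OF thL])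
  define R where "R = (\<lambda>j. integral\<^sup>L lborel (\<lambda>x. norm (grad (v_fun N p \<psi> (\<epsilon> j) (\<delta> j)) x) powr q)
                   / integral\<^sup>L lborel (\<lambda>x. v_fun N p \<psi> (\<epsilon> j) (\<delta> j) x powr s))"
  have Req: "\<forall>\<^sub>F j in sequentially. G j / Lj j powr q / (P s j / Lj j powr s) = R j"
    using Lpos by eventually_elim (simp add: R_def gradeq veq)
  have ex2: "(N - q * (L.\<gamma> + 1) - AL * q) - ((N - L.\<gamma> * s) - AL * s) = ((N - p) * s - N * q) / p"
    using exps(2)[OF p1 Np] unfolding gdef AL_def by simp
  have C1: "Theta_seq R (\<lambda>j. \<epsilon> j powr (((N-p)* s - N*q)/p))" if qc: "q > N*(p-1)/(N-1)"
  proof -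
    have kd: "real DIM(real ^ 'n) < q * (L.\<gamma> + 1)" using exps_case(1)[OF p1 Np, of q] qc unfolding gdef Ndim by simp
    have thG: "th G (\<lambda>j. \<epsilon> j powr (N - q * (L.\<gamma> + 1)))"
      using L.seq_G_gt[OF eps_pos dp ratio_lim q0 kd] unfolding G_def[abs_def] Ndim by simp
    have T1: "th (\<lambda>j. G j / Lj j powr q / (P s j / Lj j powr s))
        (\<lambda>j. \<epsilon> j powr (N - q * (L.\<gamma> + 1)) / (\<epsilon> j powr AL) powr q / (\<epsilon> j powr (N - L.\<gamma> * s) / (\<epsilon> j powr AL) powr s))"
      by (rule th_div[OF th_div[OF thG Lq] Den])
    have E1: "\<forall>\<^sub>F j in sequentially. \<epsilon> j powr (N - q * (L.\<gamma> + 1)) / (\<epsilon> j powr AL) powr q / (\<epsilon> j powr (N - L.\<gamma> * s) / (\<epsilon> j powr AL) powr s)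
        = \<epsilon> j powr (((N-p)* s - N*q)/p)"
      by (intro always_eventually allI) (simp only: pa1[OF eps_pos] ex2)
    have "th R (\<lambda>j. \<epsilon> j powr (((N-p)* s - N*q)/p))" by (rule th_cong[OF T1 Req E1])
    then show ?thesis by (rule th_Theta)
  qed
  have C2: "Theta_seq R (\<lambda>j. \<epsilon> j powr (((N-p)* s - N*q)/p) * \<bar>ln (\<epsilon> j / \<delta> j)\<bar>)" if qc: "q = N*(p-1)/(N-1)"
  proof -
    have kd: "q * (L.\<gamma> + 1) = real DIM(real ^ 'n)" using exps_case(2)[OF p1 Np, of q] qc unfolding gdef Ndim by simp
    have thG: "th G (\<lambda>j. ln (\<delta> j / \<epsilon> j))"
      using L.seq_G_eq[OF eps_pos dp ratio_lim q0 kd] unfolding G_def[abs_def] by simp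
    have T1: "th (\<lambda>j. G j / Lj j powr q / (P s j / Lj j powr s))
        (\<lambda>j. ln (\<delta> j / \<epsilon> j) / (\<epsilon> j powr AL) powr q / (\<epsilon> j powr (N - L.\<gamma> * s) / (\<epsilon> j powr AL) powr s))"
      by (rule th_div[OF th_div[OF thG Lq] Den])
    have kN: "N - q * (L.\<gamma> + 1) = 0" using kd Ndim by simp
    have ex2': "-(AL * q) - ((N - L.\<gamma> * s) - AL * s) = ((N - p) * s - N * q) / p" using ex2 kN by linarith
    have "\<forall>\<^sub>F j in sequentially. \<epsilon> j / \<delta> j < 1" using ev_ratio[OF ratio_lim, of 1] by simp
    then have E1: "\<forall>\<^sub>F j in sequentially. ln (\<delta> j / \<epsilon> j) / (\<epsilon> j powr AL) powr q / (\<epsilon> j powr (N - L.\<gamma> * s) / (\<epsilon> j powr AL) powr s)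
        = \<epsilon> j powr (((N-p)* s - N*q)/p) * \<bar>ln (\<epsilon> j / \<delta> j)\<bar>"
    proof eventually_elim
      case (elim j)
      have e0: "0 < \<epsilon> j / \<delta> j" using eps_pos[of j] dp[of j] by simp
      then have "ln (\<epsilon> j / \<delta> j) < 0" using elim by simp
      moreover have "ln (\<delta> j / \<epsilon> j) = - ln (\<epsilon> j / \<delta> j)" using eps_pos[of j] dp[of j] by (simp add: ln_div)
      ultimately have "ln (\<delta> j / \<epsilon> j) = \<bar>ln (\<epsilon> j / \<delta> j)\<bar>" by simp
      then show ?case by (simp only: pa2[OF eps_pos] ex2')
    qed
    have "th R (\<lambda>j. \<epsilon> j powr (((N-p)* s - N*q)/p) * \<bar>ln (\<epsilon> j / \<delta> j)\<bar>)" by (rule th_cong[OF T1 Req E1])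
    then show ?thesis by (rule th_Theta)
  qed
  have C3: "Theta_seq R (\<lambda>j. \<epsilon> j powr (((N-p)*(s + q/(p-1)) - N*p)/p)
                              * \<delta> j powr ((N*(p-1) - (N-1)*q)/(p-1)))" if qc: "q < N*(p-1)/(N-1)"
  proof -
    have kd: "q * (L.\<gamma> + 1) < real DIM(real ^ 'n)" using exps_case(3)[OF p1 Np, of q] qc unfolding gdef Ndim by simp
    have thG: "th G (\<lambda>j. \<delta> j powr (N - q * (L.\<gamma> + 1)))"
      using L.seq_G_lt[OF eps_pos dp ratio_lim q0 kd] unfolding G_def[abs_def] Ndim by simp
    have T1: "th (\<lambda>j. G j / Lj j powr q / (P s j / Lj j powr s))
        (\<lambda>j. \<delta> j powr (N - q * (L.\<gamma> + 1)) / (\<epsilon> j powr AL) powr q / (\<epsilon> j powr (N - L.\<gamma> * s) / (\<epsilon> j powr AL) powr s))"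
      by (rule th_div[OF th_div[OF thG Lq] Den])
    have ex3: "-(AL * q) - ((N - L.\<gamma> * s) - AL * s) = ((N-p)*(s + q/(p-1)) - N*p)/p"
      using exps(3)[OF p1 Np] unfolding gdef AL_def by simp
    have ex4: "N - q * (L.\<gamma> + 1) = (N*(p-1) - (N-1)*q)/(p-1)"
      using exps(4)[OF p1 Np] unfolding gdef by simp
    have E1: "\<forall>\<^sub>F j in sequentially. \<delta> j powr (N - q * (L.\<gamma> + 1)) / (\<epsilon> j powr AL) powr q / (\<epsilon> j powr (N - L.\<gamma> * s) / (\<epsilon> j powr AL) powr s)
        = \<epsilon> j powr (((N-p)*(s + q/(p-1)) - N*p)/p) * \<delta> j powr ((N*(p-1) - (N-1)*q)/(p-1))"
      by (intro always_eventually allI) (simp only: pa2[OF eps_pos] ex3 ex4)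
    have "th R (\<lambda>j. \<epsilon> j powr (((N-p)*(s + q/(p-1)) - N*p)/p) * \<delta> j powr ((N*(p-1) - (N-1)*q)/(p-1)))"
      by (rule th_cong[OF T1 Req E1])
    then show ?thesis by (rule th_Theta)
  qed
  define X where "X = (\<lambda>j. (\<epsilon> j / \<delta> j) powr ((N-p)/(p-1))
               / integral\<^sup>L lborel (\<lambda>x. v_fun N p \<psi> (\<epsilon> j) (\<delta> j) x powr s))"
  have CX: "Theta_seq X (\<lambda>j. \<epsilon> j powr (((N-p)*(p-1)* s - (N*p - 2*N + p)*p)/(p*(p-1)))
               * \<delta> j powr (-(N-p)/(p-1)))"
  proof -
    have thE: "th (\<lambda>j. (\<epsilon> j / \<delta> j) powr ((N-p)/(p-1))) (\<lambda>j. (\<epsilon> j / \<delta> j) powr ((N-p)/(p-1)))"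
    proof (rule th_refl, rule always_eventually, rule allI)
      fix j
      have "0 < \<epsilon> j" "0 < \<delta> j" by (rule eps_pos, rule dp)
      then show "0 < (\<epsilon> j / \<delta> j) powr ((N-p)/(p-1))" by simp
    qed
    have T1: "th (\<lambda>j. (\<epsilon> j / \<delta> j) powr ((N-p)/(p-1)) / (P s j / Lj j powr s))
        (\<lambda>j. (\<epsilon> j / \<delta> j) powr ((N-p)/(p-1)) / (\<epsilon> j powr (N - L.\<gamma> * s) / (\<epsilon> j powr AL) powr s))"
      by (rule th_div[OF thE Den])
    have Xeq: "\<forall>\<^sub>F j in sequentially. (\<epsilon> j / \<delta> j) powr ((N-p)/(p-1)) / (P s j / Lj j powr s) = X j"
      using Lpos by eventually_elim (simp add: X_def veq)
    have ex5: "(N - p) / (p - 1) - ((N - L.\<gamma> * s) - AL * s) = ((N-p)*(p-1)* s - (N*p - 2*N + p)*p)/(p*(p-1))"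
      using exps(5)[OF p1 Np] unfolding gdef AL_def by simp
    have ex6: "- ((N - p) / (p - 1)) = -(N-p)/(p-1)" using exps(6)[OF p1 Np] by simp
    have E1: "\<forall>\<^sub>F j in sequentially. (\<epsilon> j / \<delta> j) powr ((N-p)/(p-1)) / (\<epsilon> j powr (N - L.\<gamma> * s) / (\<epsilon> j powr AL) powr s)
        = \<epsilon> j powr (((N-p)*(p-1)* s - (N*p - 2*N + p)*p)/(p*(p-1))) * \<delta> j powr (-(N-p)/(p-1))"
      by (intro always_eventually allI) (simp only: pa3[OF eps_pos dp] ex5 ex6)
    have "th X (\<lambda>j. \<epsilon> j powr (((N-p)*(p-1)* s - (N*p - 2*N + p)*p)/(p*(p-1))) * \<delta> j powr (-(N-p)/(p-1)))"
      by (rule th_cong[OF T1 Xeq E1])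
    then show ?thesis by (rule th_Theta)
  qed
  show ?thesis unfolding Let_def R_def[symmetric] X_def[symmetric] using C1 C2 C3 CX by blast
qed


end
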